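(* Let $\gamma>0$ and $s\in(0,q^{-1/2})$. For every $g\in\mathcal H^D\mathcal I^{\mathcal E}_\gamma$ and every $F\in\mathcal M_s$, the product $g*_\gamma F$ is well defined and belongs to $\mathcal M_s$; moreover $(f*_\gamma g)*_\gamma F=f*_\gamma(g*_\gamma F)$ for all $f,g\in\mathcal H^D\mathcal I^{\mathcal E}_\gamma$ and $F\in\mathcal M_s$. Hence $\mathcal M_s$ is a left module over the algebra $(\mathcal H^D\mathcal I^{\mathcal E}_\gamma,*_\gamma)$, and over its quotient by the commutator ideal.
   Context: Fix $q\in(0,1)$. Notation: $(a;q)_k=\prod_{j=0}^{k-1}(1-aq^j)$, $(a;q)_\infty=\lim_k(a;q)_k$, $[k]_q!=(q;q)_k/(1-q)^k$, $e_q(x)=1/(x;q)_\infty$. The $q$-derivative is $(\partial f)(x)=\frac{f(x)-f(qx)}{(1-q)x}$ (extended to $x=0$ by continuity for $f$ holomorphic near $0$). For $\gamma>0$, $L(\gamma)=\{\pm q^k\gamma:k\in\mathbb Z\}$ and $\int_\gamma f=(1-q)\sum_{k\in\mathbb Z}\sum_{\epsilon=\pm1}q^k\gamma f(\epsilon q^k\gamma)$ whenever absolutely convergent. $\mathcal I^\infty_\gamma$ is the set of functions $f$ on $L(\gamma)$ with $\int_\gamma|f(x)x^e|<\infty$ for all integers $e\ge0$. Moments: $\mu_{e,\gamma}(f)=q^{(e^2+e)/2}\int_\gamma f(x)x^e$. The $q$-moment series is $\mu_\gamma(f)(t)=\sum_{k\ge0}\mu_{k,\gamma}(f)t^k/[k]_q!$;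 $\mathcal I^{\mathcal E}_\gamma$ is the set of $f\in\mathcal I^\infty_\gamma$ with $\mu_\gamma(f)$ entire; $\mathcal H^D\mathcal I^{\mathcal E}_\gamma$ is the set of $f\in\mathcal I^{\mathcal E}_\gamma$ for which there is an open disk centered at $0$ containing $\{\pm q^k\gamma:k\ge0\}$ and a holomorphic function on it agreeing with $f$ on the lattice points in the disk. The $q$-convolution of $f\in\mathcal I^\infty_\gamma$ with $g$ is $(f*_\gamma g)(x)=\sum_{e\ge0}\frac{(-1)^e\mu_{e,\gamma}(f)}{[e]_q!}(\partial^eg)(x)$ at all $x$ where the $q$-derivatives are defined and the series converges absolutely. For $s>0$, $\mathcal M_s$ is the set of functions $F(x)=f(x)e_{q^2}(-x^2)$ (holomorphic on $|\mathrm{Im}\,x|<1$) where $f(x)=\sum_{l\ge0}a_lx^l$ with $|a_l|\le Cs^lq^{l^2/2}$ for all $l$, for some $C>0$. *)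

theory Defs
  imports "HOL-Analysis.Analysis"
begin

definition qpoch :: "'a::real_normed_field \<Rightarrow> 'a \<Rightarrow> nat \<Rightarrow> 'a" where
  "qpoch a q k = (\<Prod>j<k. (1 - a * q ^ j))"

definition qpoch_inf :: "'a::real_normed_field \<Rightarrow> 'a \<Rightarrow> 'a" where
  "qpoch_inf a q = lim (\<lambda>k. qpoch a q k)"

definition qfact :: "real \<Rightarrow> nat \<Rightarrow> real" where
  "qfact q k = qpoch q q k / (1 - q) ^ k"

definition qexp :: "complex \<Rightarrow> complex \<Rightarrow> complex" where
  "qexp q x = 1 / qpoch_inf x q"

definition qderiv :: "real \<Rightarrow> (complex \<Rightarrow> complex) \<Rightarrow> complex \<Rightarrow> complex" where
  "qderiv q f x =
     (if x = 0 then Lim (at 0) (\<lambda>y. (f y - f (of_real q * y)) / ((1 - of_real q) * y))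
      else (f x - f (of_real q * x)) / ((1 - of_real q) * x))"

definition qlattice :: "real \<Rightarrow> real \<Rightarrow> complex set" where
  "qlattice q \<gamma> = {complex_of_real (\<epsilon> * q powi k * \<gamma>) | k \<epsilon>. \<epsilon> \<in> {-1, 1}}"

definition qint_term :: "real \<Rightarrow> real \<Rightarrow> (complex \<Rightarrow> complex) \<Rightarrow> int \<times> real \<Rightarrow> complex" where
  "qint_term q \<gamma> f = (\<lambda>(k, \<epsilon>). complex_of_real (q powi k * \<gamma>) * f (complex_of_real (\<epsilon> * q powi k * \<gamma>)))"

definition qint :: "real \<Rightarrow> real \<Rightarrow> (complex \<Rightarrow> complex) \<Rightarrow> complex" where
  "qint q \<gamma> f = complex_of_real (1 - q) * infsum (qint_term q \<gamma> f) (UNIV \<times> {-1, 1})"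

definition I_inf :: "real \<Rightarrow> real \<Rightarrow> (complex \<Rightarrow> complex) set" where
  "I_inf q \<gamma> = {f. \<forall>e::nat. (\<lambda>i. norm (qint_term q \<gamma> (\<lambda>x. f x * x ^ e) i)) summable_on (UNIV \<times> {-1, 1})}"

definition qmoment :: "real \<Rightarrow> real \<Rightarrow> nat \<Rightarrow> (complex \<Rightarrow> complex) \<Rightarrow> complex" where
  "qmoment q \<gamma> e f = complex_of_real (q ^ ((e ^ 2 + e) div 2)) * qint q \<gamma> (\<lambda>x. f x * x ^ e)"

definition I_E :: "real \<Rightarrow> real \<Rightarrow> (complex \<Rightarrow> complex) set" where
  "I_E q \<gamma> = {f. f \<in> I_inf q \<gamma> \<and>
     (\<forall>t::complex. summable (\<lambda>k. qmoment q \<gamma> k f * t ^ k / complex_of_real (qfact q k)))}"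

definition HD_I_E :: "real \<Rightarrow> real \<Rightarrow> (complex \<Rightarrow> complex) set" where
  "HD_I_E q \<gamma> = {f. f \<in> I_E q \<gamma> \<and>
     (\<exists>r h. (\<forall>k::nat. \<forall>\<epsilon>\<in>{-1,1::real}. complex_of_real (\<epsilon> * q ^ k * \<gamma>) \<in> ball 0 r) \<and>
            h holomorphic_on ball 0 r \<and>
            (\<forall>x \<in> qlattice q \<gamma> \<inter> ball 0 r. h x = f x))}"

definition qconv_term :: "real \<Rightarrow> real \<Rightarrow> (complex \<Rightarrow> complex) \<Rightarrow> (complex \<Rightarrow> complex) \<Rightarrow> complex \<Rightarrow> nat \<Rightarrow> complex" where
  "qconv_term q \<gamma> f g x e =
     (-1) ^ e * qmoment q \<gamma> e f / complex_of_real (qfact q e) * (qderiv q ^^ e) g x"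

definition qconv_defined :: "real \<Rightarrow> real \<Rightarrow> (complex \<Rightarrow> complex) \<Rightarrow> (complex \<Rightarrow> complex) \<Rightarrow> complex \<Rightarrow> bool" where
  "qconv_defined q \<gamma> f g x = summable (\<lambda>e. norm (qconv_term q \<gamma> f g x e))"

definition qconv :: "real \<Rightarrow> real \<Rightarrow> (complex \<Rightarrow> complex) \<Rightarrow> (complex \<Rightarrow> complex) \<Rightarrow> complex \<Rightarrow> complex" where
  "qconv q \<gamma> f g x = (\<Sum>e. qconv_term q \<gamma> f g x e)"

definition M_s :: "real \<Rightarrow> real \<Rightarrow> (complex \<Rightarrow> complex) set" where
  "M_s q s = {F. \<exists>a C. C > 0 \<and>
      (\<forall>l. norm (a l :: complex) \<le> C * s ^ l * q powr (real (l ^ 2) / 2)) \<and>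
      (\<forall>x. \<bar>Im x\<bar> < 1 \<longrightarrow>
           F x = (\<Sum>l. a l * x ^ l) * qexp (complex_of_real (q ^ 2)) (- (x ^ 2)))}"

end

theory Submission
  imports Defs "HOL-Complex_Analysis.Complex_Analysis"
begin


lemma qpoch_Suc: "qpoch a q (Suc k) = qpoch a q k * (1 - a * q ^ k)"
  by (simp add: qpoch_def)

lemma qpoch_Suc': "qpoch a q (Suc k) = (1 - a) * qpoch (a * q) q k"
proof (induction k)
  case 0 then show ?case by (simp add: qpoch_def)
next
  case (Suc k)
  have "qpoch a q (Suc (Suc k)) = qpoch a q (Suc k) * (1 - a * q ^ Suc k)" by (rule qpoch_Suc)
  also have "\<dots> = (1 - a) * (qpoch (a * q) q k * (1 - (a * q) * q ^ k))"
    unfolding Suc by (simp add: mult.assoc)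
  also have "\<dots> = (1 - a) * qpoch (a * q) q (Suc k)" by (simp only: qpoch_Suc)
  finally show ?case .
qed

lemma qpoch_LIMSEQ:
  fixes a :: complex and Q :: real
  assumes "0 \<le> Q" "Q < 1"
  shows "qpoch a (of_real Q) \<longlonglongrightarrow> qpoch_inf a (of_real Q)"
proof -
  let ?f = "\<lambda>j. 1 - a * of_real Q ^ j"
  have "summable (\<lambda>j. norm (a) * Q ^ j)"
    using assms by (intro summable_mult summable_geometric) auto
  hence "summable (\<lambda>j. norm (?f j - 1))"
    using assms by (simp add: norm_mult norm_power)
  hence "abs_convergent_prod ?f" by (rule summable_imp_abs_convergent_prod)
  hence "convergent_prod ?f" by (rule abs_convergent_prod_imp_convergent_prod)
  hence "(\<lambda>n. \<Prod>i\<le>n. ?f i) \<longlonglongrightarrow> prodinf ?f" by (rule convergent_prod_LIMSEQ)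
  hence "(\<lambda>n. qpoch a (of_real Q) (Suc n)) \<longlonglongrightarrow> prodinf ?f"
    by (simp add: qpoch_def lessThan_Suc_atMost)
  hence L: "qpoch a (of_real Q) \<longlonglongrightarrow> prodinf ?f" by (rule LIMSEQ_imp_Suc)
  hence "convergent (qpoch a (of_real Q))" by (auto simp: convergent_def)
  then show ?thesis unfolding qpoch_inf_def by (simp add: convergent_LIMSEQ_iff)
qed

lemma qpoch_inf_shift:
  fixes a :: complex and Q :: real
  assumes "0 \<le> Q" "Q < 1"
  shows "qpoch_inf a (of_real Q) = (1 - a) * qpoch_inf (a * of_real Q) (of_real Q)"
proof -
  have "(\<lambda>k. (1 - a) * qpoch (a * of_real Q) (of_real Q) k) \<longlonglongrightarrow> (1 - a) * qpoch_inf (a * of_real Q) (of_real Q)"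
    by (intro tendsto_mult tendsto_const qpoch_LIMSEQ assms)
  hence "(\<lambda>k. qpoch a (of_real Q) (Suc k)) \<longlonglongrightarrow> (1 - a) * qpoch_inf (a * of_real Q) (of_real Q)"
    by (simp only: qpoch_Suc')
  hence "qpoch a (of_real Q) \<longlonglongrightarrow> (1 - a) * qpoch_inf (a * of_real Q) (of_real Q)"
    by (rule LIMSEQ_imp_Suc)
  with qpoch_LIMSEQ[OF assms, of a] show ?thesis using LIMSEQ_unique by blast
qed

lemma prod_one_plus_le_exp:
  fixes x :: "nat \<Rightarrow> real"
  assumes "\<And>j. 0 \<le> x j"
  shows "(\<Prod>j<k. 1 + x j) \<le> exp (\<Sum>j<k. x j)"
proof -
  have "(\<Prod>j<k. 1 + x j) \<le> (\<Prod>j<k. exp (x j))"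
    by (intro prod_mono) (use assms in \<open>auto simp: add_nonneg_nonneg intro: exp_ge_add_one_self[THEN order.trans[rotated]]\<close>)
  also have "\<dots> = exp (\<Sum>j<k. x j)" by (simp add: exp_sum)
  finally show ?thesis .
qed

lemma qpoch_minus1_bound:
  fixes a :: complex and Q :: real
  assumes "0 \<le> Q" "Q < 1"
  shows "norm (qpoch a (of_real Q) k - 1) \<le> exp (norm a / (1 - Q)) - 1"
proof -
  have "norm (qpoch a (of_real Q) k - 1) = norm ((\<Prod>j<k. 1 + (- a * of_real Q ^ j)) - 1)"
    by (simp add: qpoch_def)
  also have "\<dots> \<le> (\<Prod>j<k. 1 + norm (- a * of_real Q ^ j)) - 1"
    by (rule norm_prod_minus1_le_prod_minus1)
  also have "\<dots> = (\<Prod>j<k. 1 + norm a * Q ^ j) - 1"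
    using assms by (simp add: norm_mult norm_power)
  also have "\<dots> \<le> exp (\<Sum>j<k. norm a * Q ^ j) - 1"
    using prod_one_plus_le_exp[of "\<lambda>j. norm a * Q ^ j" k] assms by simp
  also have "(\<Sum>j<k. norm a * Q ^ j) \<le> norm a / (1 - Q)"
  proof -
    have "(\<Sum>j<k. norm a * Q ^ j) \<le> (\<Sum>j. norm a * Q ^ j)"
      using assms by (intro sum_le_suminf summable_mult summable_geometric) auto
    also have "\<dots> = norm a / (1 - Q)"
      using assms by (simp add: suminf_mult suminf_geometric divide_simps)
    finally show ?thesis .
  qed
  hence "exp (\<Sum>j<k. norm a * Q ^ j) - 1 \<le> exp (norm a / (1 - Q)) - 1" by simp
  finally show ?thesis .
qed

lemma qpoch_inf_minus1_bound:
  fixes a :: complex and Q :: real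
  assumes "0 \<le> Q" "Q < 1"
  shows "norm (qpoch_inf a (of_real Q) - 1) \<le> exp (norm a / (1 - Q)) - 1"
proof -
  have "(\<lambda>k. norm (qpoch a (of_real Q) k - 1)) \<longlonglongrightarrow> norm (qpoch_inf a (of_real Q) - 1)"
    by (intro tendsto_norm tendsto_diff qpoch_LIMSEQ assms tendsto_const)
  then show ?thesis
    by (rule LIMSEQ_le_const2) (use qpoch_minus1_bound[OF assms] in auto)
qed

definition Eq :: "real \<Rightarrow> complex \<Rightarrow> complex" where
  "Eq q x = qexp (complex_of_real (q ^ 2)) (- (x ^ 2))"

lemma strip_nonzero: "\<bar>Im x\<bar> < 1 \<Longrightarrow> 1 + x ^ 2 \<noteq> 0"
proof
  assume a: "\<bar>Im x\<bar> < 1" and b: "1 + x ^ 2 = 0"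
  hence "Re (1 + x^2) = 0" "Im (1 + x^2) = 0" by simp_all
  hence r: "1 + Re x * Re x - Im x * Im x = 0" and i: "Re x * Im x = 0"
    by (auto simp add: power2_eq_square)
  show False
  proof (cases "Re x = 0")
    case True
    with r have "Im x * Im x = 1" by simp
    moreover have "(Im x)^2 < 1" using a by (simp add: abs_square_less_1)
    ultimately show False by (simp add: power2_eq_square)
  next
    case False
    with i have "Im x = 0" by simp
    with r have "1 + Re x * Re x = 0" by simp
    moreover have "0 \<le> Re x * Re x" by simp
    ultimately show False by linarith
  qed
qed

lemma Eq_shift:
  assumes "0 < q" "q < 1" "1 + x ^ 2 \<noteq> 0"
  shows "Eq q (of_real q * x) = (1 + x ^ 2) * Eq q x"
proof -
  have q2: "0 \<le> q^2" "q^2 < 1" using assms by (auto simp: power_less_one_iff)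
  have "qpoch_inf (- (x^2)) (complex_of_real (q^2)) =
        (1 + x^2) * qpoch_inf (- (x^2) * complex_of_real (q^2)) (complex_of_real (q^2))"
    using qpoch_inf_shift[OF q2, of "- (x^2)"] by simp
  moreover have "- (x^2) * complex_of_real (q^2) = - ((of_real q * x) ^ 2)"
    by (simp add: power_mult_distrib)
  ultimately have e: "qpoch_inf (- (x^2)) (complex_of_real (q^2)) =
        (1 + x^2) * qpoch_inf (- ((of_real q * x) ^ 2)) (complex_of_real (q^2))" by simp
  have aux: "a \<noteq> 0 \<Longrightarrow> 1 / b = a * (1 / (a * b))" for a b :: complex
    by (cases "b = 0") (auto simp: field_simps)
  show ?thesis
    unfolding Eq_def qexp_def e using aux[OF assms(3)] by simp
qed

lemma qpoch_inf_zero: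
  fixes Q :: real assumes "0 \<le> Q" "Q < 1"
  shows "qpoch_inf (0::complex) (of_real Q) = 1"
proof -
  have "qpoch (0::complex) (of_real Q) = (\<lambda>k. 1)" by (rule ext) (simp add: qpoch_def)
  hence "qpoch (0::complex) (of_real Q) \<longlonglongrightarrow> 1" by simp
  with qpoch_LIMSEQ[OF assms, of 0] show ?thesis using LIMSEQ_unique by blast
qed

lemma Eq_zero: "0 < q \<Longrightarrow> q < 1 \<Longrightarrow> Eq q 0 = 1"
  unfolding Eq_def qexp_def
  using qpoch_inf_zero[of "q^2"] by (simp add: power_less_one_iff)

lemma Eq_tendsto:
  assumes "0 < q" "q < 1"
  shows "(Eq q \<longlongrightarrow> 1) (at 0)"
proof -
  have q2: "0 \<le> q^2" "q^2 < 1" using assms by (auto simp: power_less_one_iff)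
  let ?P = "\<lambda>y. qpoch_inf (- (y^2)) (complex_of_real (q^2))"
  have b: "norm (?P y - 1) \<le> exp (norm y ^ 2 / (1 - q^2)) - 1" for y
    using qpoch_inf_minus1_bound[OF q2, of "- (y^2)"] by (simp add: norm_power)
  have "((\<lambda>y::complex. exp (norm y ^ 2 / (1 - q^2)) - 1) \<longlongrightarrow> exp (norm (0::complex) ^ 2 / (1 - q^2)) - 1) (at 0)"
    using q2 by (intro tendsto_intros) auto
  hence g: "((\<lambda>y::complex. exp (norm y ^ 2 / (1 - q^2)) - 1) \<longlongrightarrow> 0) (at 0)" by simp
  have "((\<lambda>y. ?P y - 1) \<longlongrightarrow> 0) (at 0)"
    by (rule Lim_null_comparison[OF _ g]) (use b in auto)
  hence "(?P \<longlongrightarrow> 1) (at 0)" by (simp add: LIM_zero_iff)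
  hence "((\<lambda>y. 1 / ?P y) \<longlongrightarrow> 1 / 1) (at 0)" by (intro tendsto_divide tendsto_const) auto
  then show ?thesis unfolding Eq_def qexp_def by simp
qed

definition qn :: "real \<Rightarrow> nat \<Rightarrow> real" where
  "qn q n = (1 - q ^ n) / (1 - q)"

definition wt :: "real \<Rightarrow> real \<Rightarrow> nat \<Rightarrow> real" where
  "wt q s l = s ^ l * q powr (real (l ^ 2) / 2)"

definition Lop :: "real \<Rightarrow> (nat \<Rightarrow> complex) \<Rightarrow> nat \<Rightarrow> complex" where
  "Lop q b l = of_real (qn q (Suc l)) * b (Suc l)
     - (if l = 0 then 0 else of_real (q ^ (l - 1) / (1 - q)) * b (l - 1))"

definition PS :: "(nat \<Rightarrow> complex) \<Rightarrow> complex \<Rightarrow> complex" where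
  "PS b x = (\<Sum>l. b l * x ^ l)"

definition KK :: "real \<Rightarrow> real \<Rightarrow> real" where
  "KK q s = (s * sqrt q + 1 / (s * sqrt q)) / (1 - q)"

lemma qn_nonneg: "0 < q \<Longrightarrow> q < 1 \<Longrightarrow> 0 \<le> qn q n"
  by (simp add: qn_def power_le_one)

lemma qn_le: "0 < q \<Longrightarrow> q < 1 \<Longrightarrow> qn q n \<le> 1 / (1 - q)"
  by (simp add: qn_def divide_right_mono)

lemma wt_pos: "0 < q \<Longrightarrow> 0 < s \<Longrightarrow> 0 < wt q s l"
  by (simp add: wt_def)

lemma wt_Suc: "0 < q \<Longrightarrow> wt q s (Suc l) = wt q s l * s * q ^ l * sqrt q"
proof -
  assume q: "0 < q"
  have "real ((Suc l)^2) / 2 = real (l^2) / 2 + real l + 1/2"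
    by (simp add: power2_eq_square algebra_simps)
  hence "q powr (real ((Suc l)^2) / 2) = q powr (real (l^2) / 2 + real l + 1/2)"
    by (simp only:)
  also have "\<dots> = q powr (real (l^2) / 2) * q powr (real l) * q powr (1/2)"
    by (simp only: powr_add)
  also have "\<dots> = q powr (real (l^2) / 2) * q ^ l * sqrt q"
    using q by (simp add: powr_realpow powr_half_sqrt)
  finally show ?thesis by (simp add: wt_def)
qed

lemma KK_pos: "0 < q \<Longrightarrow> q < 1 \<Longrightarrow> 0 < s \<Longrightarrow> 0 < KK q s"
  unfolding KK_def by (intro divide_pos_pos add_pos_pos) auto

lemma Lop_bound:
  assumes q: "0 < q" "q < 1" and s: "0 < s" and b: "\<And>l. norm (b l) \<le> C * wt q s l"
  shows "norm (Lop q b l) \<le> C * KK q s * wt q s l"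
proof -
  have C: "0 \<le> C" using b[of 0] wt_pos[OF q(1) s, of 0]
    by (metis norm_ge_zero order_trans zero_le_mult_iff linorder_not_le less_eq_real_def)
  have sq: "0 < sqrt q" "sqrt q \<le> 1" using q by auto
  have w: "0 < wt q s l" by (rule wt_pos[OF q(1) s])
  have t1: "norm (of_real (qn q (Suc l)) * b (Suc l)) \<le> C * (s * sqrt q / (1 - q)) * wt q s l"
  proof -
    have "norm (of_real (qn q (Suc l)) * b (Suc l)) = qn q (Suc l) * norm (b (Suc l))"
      using qn_nonneg[OF q] by (simp add: norm_mult)
    also have "\<dots> \<le> (1 / (1 - q)) * (C * (wt q s l * s * q ^ l * sqrt q))"
      using b[of "Suc l"] qn_le[OF q] qn_nonneg[OF q] wt_Suc[OF q(1)] q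
      by (intro mult_mono) auto
    also have "\<dots> \<le> (1 / (1 - q)) * (C * (wt q s l * s * 1 * sqrt q))"
      using q s C w sq by (intro mult_left_mono mult_right_mono) (auto simp: power_le_one)
    finally show ?thesis by (simp add: field_simps)
  qed
  have t2: "norm (if l = 0 then 0 else of_real (q ^ (l - 1) / (1 - q)) * b (l - 1))
            \<le> C * (1 / (s * sqrt q) / (1 - q)) * wt q s l"
  proof (cases l)
    case 0 then show ?thesis using C w q s by simp
  next
    case (Suc m)
    have "norm (of_real (q ^ m / (1 - q)) * b m) = q ^ m / (1 - q) * norm (b m)"
      using q by (simp only: norm_mult norm_of_real) simp
    also have "\<dots> \<le> q ^ m / (1 - q) * (C * wt q s m)"
      using b[of m] q by (intro mult_left_mono) auto
    also have "\<dots> = C * (1 / (s * sqrt q) / (1 - q)) * wt q s (Suc m)"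
      using wt_Suc[OF q(1), of s m] q s sq by (simp add: field_simps)
    finally show ?thesis using Suc by simp
  qed
  have "norm (Lop q b l) \<le> C * (s * sqrt q / (1 - q)) * wt q s l + C * (1 / (s * sqrt q) / (1 - q)) * wt q s l"
    unfolding Lop_def by (rule order.trans[OF norm_triangle_ineq4 add_mono[OF t1 t2]])
  also have "\<dots> = C * KK q s * wt q s l"
    unfolding KK_def add_divide_distrib by (simp only: distrib_left distrib_right)
  finally show ?thesis .
qed


definition WB :: "real \<Rightarrow> real \<Rightarrow> real \<Rightarrow> (nat \<Rightarrow> complex) \<Rightarrow> bool" where
  "WB q s C b \<longleftrightarrow> (\<forall>l. norm (b l) \<le> C * wt q s l)"

definition Rep :: "real \<Rightarrow> (complex \<Rightarrow> complex) \<Rightarrow> (nat \<Rightarrow> complex) \<Rightarrow> bool" where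
  "Rep q G b \<longleftrightarrow> (\<forall>x. \<bar>Im x\<bar> < 1 \<longrightarrow> G x = PS b x * Eq q x)"

locale qs =
  fixes q s :: real
  assumes q0: "0 < q" and q1: "q < 1" and s0: "0 < s"
begin

lemma wt_summable:
  assumes r: "0 \<le> r"
  shows "summable (\<lambda>l. wt q s l * r ^ l)"
proof -
  define c where "c = s * sqrt q * r"
  have c0: "0 \<le> c" using r s0 q0 by (simp add: c_def)
  obtain N where N: "q ^ N < 1 / (2 * (c + 1))"
    using real_arch_pow_inv[of "1 / (2 * (c + 1))" q] q0 q1 c0 by auto
  show ?thesis
  proof (rule summable_ratio_test[of "1/2" N])
    fix n assume n: "N \<le> n"
    have qn: "q ^ n \<le> q ^ N" using n q0 q1 by (simp add: power_decreasing)
    have "c * q ^ n \<le> (c + 1) * (1 / (2 * (c + 1)))"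
      using qn N c0 q0 by (intro mult_mono) auto
    moreover have "(c + 1) * (1 / (2 * (c + 1))) = 1/2" using c0 by simp
    ultimately have cq: "c * q ^ n \<le> 1/2" by linarith
    have e: "wt q s (Suc n) * r ^ Suc n = (wt q s n * r ^ n) * (c * q ^ n)"
      using wt_Suc[OF q0] by (simp add: c_def algebra_simps)
    have "0 \<le> (wt q s n * r ^ n) * (c * q ^ n)"
      using wt_pos[OF q0 s0, of n] r c0 q0 by simp
    hence "norm (wt q s (Suc n) * r ^ Suc n) = (wt q s n * r ^ n) * (c * q ^ n)"
      unfolding e by simp
    also have "\<dots> \<le> (wt q s n * r ^ n) * (1/2)"
      using cq wt_pos[OF q0 s0, of n] r by (intro mult_left_mono) auto
    finally show "norm (wt q s (Suc n) * r ^ Suc n) \<le> 1/2 * norm (wt q s n * r ^ n)"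
      using wt_pos[OF q0 s0, of n] r by (simp add: abs_mult)
  qed simp
qed

lemma WB_summable_norm:
  assumes "WB q s C b"
  shows "summable (\<lambda>l. norm (b l * x ^ l))"
proof (rule summable_comparison_test[OF _ summable_mult[OF wt_summable[of "norm x"], of C]])
  have "norm (norm (b n * x ^ n)) \<le> C * (wt q s n * norm x ^ n)" for n
  proof -
    have "norm (b n) * norm x ^ n \<le> (C * wt q s n) * norm x ^ n"
      using assms unfolding WB_def by (intro mult_right_mono) auto
    thus ?thesis by (simp add: norm_mult norm_power mult.assoc)
  qed
  thus "\<exists>N. \<forall>n\<ge>N. norm (norm (b n * x ^ n)) \<le> C * (wt q s n * norm x ^ n)" by blast
qed simp

lemma WB_summable:
  assumes "WB q s C b"
  shows "summable (\<lambda>l. b l * x ^ l)"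
  using WB_summable_norm[OF assms] by (rule summable_norm_cancel)

lemma WB_Lop: "WB q s C b \<Longrightarrow> WB q s (C * KK q s) (Lop q b)"
  unfolding WB_def using Lop_bound[OF q0 q1 s0] by blast

lemma WB_mono: "WB q s C b \<Longrightarrow> C \<le> C' \<Longrightarrow> WB q s C' b"
  unfolding WB_def using wt_pos[OF q0 s0]
  by (meson less_imp_le mult_right_mono order_trans)

lemma PS_identity:
  assumes b: "WB q s C b"
  shows "PS b x - (1 + x^2) * PS b (of_real q * x) = of_real (1 - q) * x * PS (Lop q b) x"
proof -
  define y where "y = of_real q * x"
  define g where "g l = (if 2 \<le> l then b (l - 2) * y ^ (l - 2) * x^2 else 0)" for l
  define u where "u l = b l * x ^ l - b l * y ^ l - g l" for l
  have S1: "(\<lambda>l. b l * x ^ l) sums PS b x"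
    unfolding PS_def by (rule summable_sums[OF WB_summable[OF b]])
  have S2: "(\<lambda>l. b l * y ^ l) sums PS b y"
    unfolding PS_def by (rule summable_sums[OF WB_summable[OF b]])
  have "(\<lambda>i. g (i + 2)) sums (PS b y * x^2)"
    unfolding g_def using sums_mult2[OF S2, of "x^2"] by simp
  hence S3: "g sums (PS b y * x^2)"
    by (subst (asm) sums_iff_shift) (simp add: g_def)
  have U: "u sums (PS b x - PS b y - PS b y * x^2)"
    unfolding u_def by (intro sums_diff S1 S2 S3)
  have S4: "(\<lambda>l. Lop q b l * x ^ l) sums PS (Lop q b) x"
    unfolding PS_def by (rule summable_sums[OF WB_summable[OF WB_Lop[OF b]]])
  have V: "(\<lambda>l. of_real (1 - q) * x * (Lop q b l * x ^ l)) sums (of_real (1 - q) * x * PS (Lop q b) x)"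
    by (rule sums_mult[OF S4])
  have qq: "(1 - q) \<noteq> 0" using q1 by simp
  have vu: "of_real (1 - q) * x * (Lop q b l * x ^ l) = u (Suc l)" for l
  proof -
    have e1: "complex_of_real (1 - q) * complex_of_real (qn q (Suc l)) = 1 - of_real q ^ Suc l"
      using qq by (simp add: qn_def field_simps)
    show ?thesis
    proof (cases l)
      case 0
      have "of_real (1 - q) * x * (Lop q b l * x ^ l) =
            (complex_of_real (1 - q) * complex_of_real (qn q (Suc l))) * b (Suc l) * x ^ Suc l"
        unfolding Lop_def 0 by (simp add: algebra_simps)
      also have "\<dots> = u (Suc l)"
        unfolding e1 u_def g_def y_def 0
        using qq by (simp add: algebra_simps power_mult_distrib qn_def)
      finally show ?thesis .
    next
      case (Suc m)
      have e2: "complex_of_real (1 - q) * complex_of_real (q ^ m / (1 - q)) = of_real q ^ m"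
        using qq by (simp add: field_simps)
      have "of_real (1 - q) * x * (Lop q b l * x ^ l) =
            (complex_of_real (1 - q) * complex_of_real (qn q (Suc l))) * b (Suc l) * x ^ Suc l
          - (complex_of_real (1 - q) * complex_of_real (q ^ m / (1 - q))) * b m * x ^ Suc l"
        unfolding Lop_def Suc by (simp add: algebra_simps)
      also have "\<dots> = u (Suc l)"
        unfolding e1 e2
        by (simp add: u_def g_def y_def Suc algebra_simps power_mult_distrib power2_eq_square)
      finally show ?thesis .
    qed
  qed
  have "(\<lambda>l. u (Suc l)) sums (of_real (1 - q) * x * PS (Lop q b) x)"
    using V unfolding vu .
  hence "u sums (of_real (1 - q) * x * PS (Lop q b) x + u 0)" by (simp add: sums_Suc_iff)
  moreover have "u 0 = 0" by (simp add: u_def g_def)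
  ultimately have "u sums (of_real (1 - q) * x * PS (Lop q b) x)" by simp
  with U have "PS b x - PS b y - PS b y * x^2 = of_real (1 - q) * x * PS (Lop q b) x"
    by (rule sums_unique2)
  thus ?thesis unfolding y_def by (simp add: algebra_simps)
qed

lemma strip_q: "\<bar>Im x\<bar> < 1 \<Longrightarrow> \<bar>Im (of_real q * x)\<bar> < 1"
proof -
  assume a: "\<bar>Im x\<bar> < 1"
  have "\<bar>Im (of_real q * x)\<bar> = q * \<bar>Im x\<bar>" using q0 by (simp add: abs_mult)
  also have "\<dots> \<le> 1 * \<bar>Im x\<bar>" using q1 by (intro mult_right_mono) auto
  finally show ?thesis using a by simp
qed

lemma Rep_quot:
  assumes R: "Rep q G b" and b: "WB q s C b" and x: "\<bar>Im x\<bar> < 1" "x \<noteq> 0"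
  shows "(G x - G (of_real q * x)) / ((1 - of_real q) * x) = PS (Lop q b) x * Eq q x"
proof -
  have Gx: "G x = PS b x * Eq q x" using R x unfolding Rep_def by blast
  have "G (of_real q * x) = PS b (of_real q * x) * Eq q (of_real q * x)"
    using R strip_q[OF x(1)] unfolding Rep_def by blast
  also have "\<dots> = PS b (of_real q * x) * ((1 + x^2) * Eq q x)"
    using Eq_shift[OF q0 q1 strip_nonzero[OF x(1)]] by simp
  finally have "G x - G (of_real q * x) = Eq q x * (PS b x - (1 + x^2) * PS b (of_real q * x))"
    using Gx by (simp add: algebra_simps)
  also have "\<dots> = Eq q x * (of_real (1 - q) * x * PS (Lop q b) x)"
    using PS_identity[OF b] by simp
  finally have e: "G x - G (of_real q * x) = ((1 - of_real q) * x) * (PS (Lop q b) x * Eq q x)"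
    by (simp add: algebra_simps)
  have "(1 - of_real q) * x \<noteq> 0" using x(2) q1 by simp
  then show ?thesis unfolding e by simp
qed

lemma PS_isCont:
  assumes b: "WB q s C b"
  shows "isCont (PS b) x"
  unfolding PS_def[abs_def]
  by (rule isCont_powser_converges_everywhere) (rule WB_summable[OF b])

lemma qderiv_Rep:
  assumes R: "Rep q G b" and b: "WB q s C b"
  shows "Rep q (qderiv q G) (Lop q b)"
  unfolding Rep_def
proof (intro allI impI)
  fix x :: complex assume x: "\<bar>Im x\<bar> < 1"
  show "qderiv q G x = PS (Lop q b) x * Eq q x"
  proof (cases "x = 0")
    case False
    then show ?thesis using Rep_quot[OF R b x False] by (simp add: qderiv_def)
  next
    case True
    let ?Q = "\<lambda>y. (G y - G (of_real q * y)) / ((1 - of_real q) * y)"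
    have ev: "eventually (\<lambda>y. PS (Lop q b) y * Eq q y = ?Q y) (at (0::complex))"
    proof -
      have "eventually (\<lambda>y. y \<noteq> 0 \<and> dist y 0 < 1) (at (0::complex))"
        by (auto simp: eventually_at intro!: exI[of _ 1])
      then show ?thesis
      proof (rule eventually_mono)
        fix y :: complex assume y: "y \<noteq> 0 \<and> dist y 0 < 1"
        have "\<bar>Im y\<bar> < 1" using y abs_Im_le_cmod[of y] by simp
        then show "PS (Lop q b) y * Eq q y = ?Q y" using Rep_quot[OF R b _ ] y by simp
      qed
    qed
    have "((\<lambda>y. PS (Lop q b) y * Eq q y) \<longlongrightarrow> PS (Lop q b) 0 * 1) (at 0)"
      using PS_isCont[OF WB_Lop[OF b], of 0] Eq_tendsto[OF q0 q1]
      by (intro tendsto_mult) (auto simp: isCont_def)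
    hence "(?Q \<longlongrightarrow> PS (Lop q b) 0 * 1) (at 0)" using ev by (rule Lim_transform_eventually)
    hence "Lim (at 0) ?Q = PS (Lop q b) 0 * 1" by (intro tendsto_Lim) auto
    then show ?thesis using True Eq_zero[OF q0 q1] by (simp add: qderiv_def)
  qed
qed

lemma iter_Rep:
  assumes R: "Rep q G b" and b: "WB q s C b"
  shows "Rep q ((qderiv q ^^ n) G) ((Lop q ^^ n) b) \<and> WB q s (C * KK q s ^ n) ((Lop q ^^ n) b)"
proof (induction n)
  case 0 then show ?case using R b by simp
next
  case (Suc n)
  then show ?case
    using qderiv_Rep[of "(qderiv q ^^ n) G" "(Lop q ^^ n) b"] WB_Lop[of "C * KK q s ^ n" "(Lop q ^^ n) b"]
    by (auto simp: mult_ac)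
qed

end


lemma has_sum_suminf_norm:
  fixes f :: "nat \<Rightarrow> 'a::banach"
  assumes "summable (\<lambda>n. norm (f n))"
  shows "(f has_sum (\<Sum>n. f n)) UNIV"
  using norm_summable_imp_has_sum[OF assms summable_sums[OF summable_norm_cancel[OF assms]]] .

lemma infsum_suminf_norm:
  fixes f :: "nat \<Rightarrow> 'a::banach"
  assumes "summable (\<lambda>n. norm (f n))"
  shows "infsum f UNIV = (\<Sum>n. f n)"
  using has_sum_suminf_norm[OF assms] by (rule infsumI)

lemma suminf_swap_general:
  fixes \<phi> :: "nat \<Rightarrow> nat \<Rightarrow> complex"
  assumes r: "\<And>d. summable (\<lambda>n. norm (\<phi> d n))"
    and o: "summable (\<lambda>d. \<Sum>n. norm (\<phi> d n))"
  shows "(\<Sum>d. \<Sum>n. \<phi> d n) = (\<Sum>n. \<Sum>d. \<phi> d n)"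
    and "\<And>n. summable (\<lambda>d. norm (\<phi> d n))"
    and "summable (\<lambda>n. \<Sum>d. norm (\<phi> d n))"
proof -
  have hs: "((\<lambda>n. norm (\<phi> d n)) has_sum (\<Sum>n. norm (\<phi> d n))) UNIV" for d
    using r[of d] by (intro has_sum_suminf_norm) simp
  have gs: "(\<lambda>d. \<Sum>n. norm (\<phi> d n)) summable_on UNIV"
    using o by (subst summable_on_UNIV_nonneg_real_iff) (auto intro: suminf_nonneg r)
  have psi: "(\<lambda>(d,n). norm (\<phi> d n)) summable_on (Sigma UNIV (\<lambda>_. UNIV))"
    by (rule summable_on_SigmaI[where g = "\<lambda>d. \<Sum>n. norm (\<phi> d n)"]) (use hs gs in auto)
  have eqf: "(\<lambda>x. norm ((\<lambda>(d,n). \<phi> d n) x)) = (\<lambda>(d,n). norm (\<phi> d n))"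
    by (auto simp: fun_eq_iff)
  have ab: "(\<lambda>(d,n). \<phi> d n) summable_on (UNIV \<times> UNIV)"
    by (rule abs_summable_summable) (unfold eqf, rule psi)
  have col: "summable (\<lambda>d. norm (\<phi> d n))" for n
  proof (rule summable_comparison_test[OF _ o])
    have "norm (\<phi> d n) \<le> (\<Sum>n. norm (\<phi> d n))" for d
    proof -
      have "sum (\<lambda>n. norm (\<phi> d n)) {n} \<le> (\<Sum>n. norm (\<phi> d n))"
        by (rule sum_le_suminf[OF r[of d]]) auto
      thus ?thesis by simp
    qed
    thus "\<exists>N. \<forall>d\<ge>N. norm (norm (\<phi> d n)) \<le> (\<Sum>n. norm (\<phi> d n))" by auto
  qed
  thus "\<And>n. summable (\<lambda>d. norm (\<phi> d n))" .
  have psi': "(\<lambda>(n,d). norm (\<phi> d n)) summable_on (UNIV \<times> UNIV)"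
    using psi summable_on_swap[of "\<lambda>(d,n). norm (\<phi> d n)" UNIV UNIV] by simp
  have colon: "(\<lambda>d. norm (\<phi> d n)) summable_on UNIV" for n
    using col[of n] by (subst summable_on_UNIV_nonneg_real_iff) auto
  have "(\<lambda>n. infsum (\<lambda>d. norm (\<phi> d n)) UNIV) summable_on UNIV"
    using summable_on_SigmaD[of "\<lambda>(n,d). norm (\<phi> d n)" UNIV "\<lambda>_. UNIV", OF psi'] colon
    by (simp only: case_prod_conv)
  moreover have "infsum (\<lambda>d. norm (\<phi> d n)) UNIV = (\<Sum>d. norm (\<phi> d n))" for n
    using col[of n] by (intro infsum_suminf_norm) simp
  ultimately have "(\<lambda>n. \<Sum>d. norm (\<phi> d n)) summable_on UNIV" by simp
  thus cs: "summable (\<lambda>n. \<Sum>d. norm (\<phi> d n))" by (rule summable_on_imp_summable)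
  have sw: "infsum (\<lambda>d. infsum (\<lambda>n. \<phi> d n) UNIV) UNIV = infsum (\<lambda>n. infsum (\<lambda>d. \<phi> d n) UNIV) UNIV"
    using ab by (rule infsum_swap_banach)
  have i1: "infsum (\<lambda>n. \<phi> d n) UNIV = (\<Sum>n. \<phi> d n)" for d by (rule infsum_suminf_norm[OF r])
  have i2: "infsum (\<lambda>d. \<phi> d n) UNIV = (\<Sum>d. \<phi> d n)" for n by (rule infsum_suminf_norm[OF col])
  have i3: "infsum (\<lambda>d. \<Sum>n. \<phi> d n) UNIV = (\<Sum>d. \<Sum>n. \<phi> d n)"
  proof (rule infsum_suminf_norm, rule summable_comparison_test[OF _ o])
    show "\<exists>N. \<forall>d\<ge>N. norm (norm (\<Sum>n. \<phi> d n)) \<le> (\<Sum>n. norm (\<phi> d n))"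
      using summable_norm[OF r] by auto
  qed
  have i4: "infsum (\<lambda>n. \<Sum>d. \<phi> d n) UNIV = (\<Sum>n. \<Sum>d. \<phi> d n)"
  proof (rule infsum_suminf_norm, rule summable_comparison_test[OF _ cs])
    show "\<exists>N. \<forall>n\<ge>N. norm (norm (\<Sum>d. \<phi> d n)) \<le> (\<Sum>d. norm (\<phi> d n))"
      using summable_norm[OF col] by auto
  qed
  have "(\<Sum>d. \<Sum>n. \<phi> d n) = infsum (\<lambda>d. infsum (\<lambda>n. \<phi> d n) UNIV) UNIV"
    unfolding i1 i3 ..
  also have "\<dots> = infsum (\<lambda>n. \<Sum>d. \<phi> d n) UNIV" unfolding sw i2 ..
  also have "\<dots> = (\<Sum>n. \<Sum>d. \<phi> d n)" by (rule i4)
  finally show "(\<Sum>d. \<Sum>n. \<phi> d n) = (\<Sum>n. \<Sum>d. \<phi> d n)" .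
qed

lemma suminf_swap_prod:
  fixes \<phi> :: "nat \<Rightarrow> nat \<Rightarrow> complex"
  assumes b: "\<And>d n. norm (\<phi> d n) \<le> A d * B n" and A: "summable A" and B: "summable B"
    and A0: "\<And>d. 0 \<le> A d" and B0: "\<And>n. 0 \<le> B n"
  shows "(\<Sum>d. \<Sum>n. \<phi> d n) = (\<Sum>n. \<Sum>d. \<phi> d n)"
    and "\<And>d. summable (\<lambda>n. norm (\<phi> d n))"
    and "\<And>n. summable (\<lambda>d. norm (\<phi> d n))"
proof -
  have r: "summable (\<lambda>n. norm (\<phi> d n))" for d
    by (rule summable_comparison_test[OF _ summable_mult[OF B, of "A d"]]) (use b[of d] in auto)
  have "summable (\<lambda>d. \<Sum>n. norm (\<phi> d n))"
  proof (rule summable_comparison_test[OF _ summable_mult2[OF A, of "\<Sum>n. B n"]])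
    have "(\<Sum>n. norm (\<phi> d n)) \<le> (\<Sum>n. A d * B n)" for d
      by (rule suminf_le[OF b[of d] r[of d] summable_mult[OF B]])
    moreover have "(\<Sum>n. A d * B n) = A d * (\<Sum>n. B n)" for d by (rule suminf_mult[OF B])
    moreover have "0 \<le> (\<Sum>n. norm (\<phi> d n))" for d by (rule suminf_nonneg[OF r]) simp
    ultimately have "norm (\<Sum>n. norm (\<phi> d n)) \<le> A d * (\<Sum>n. B n)" for d by simp
    thus "\<exists>N. \<forall>d\<ge>N. norm (\<Sum>n. norm (\<phi> d n)) \<le> A d * (\<Sum>n. B n)" by blast
  qed
  note S = suminf_swap_general[OF r this]
  show "(\<Sum>d. \<Sum>n. \<phi> d n) = (\<Sum>n. \<Sum>d. \<phi> d n)" by (rule S(1))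
  show "\<And>n. summable (\<lambda>d. norm (\<phi> d n))" by (rule S(2))
  show "\<And>d. summable (\<lambda>n. norm (\<phi> d n))" by (rule r)
qed


lemma Lop_suminf:
  assumes "\<And>l. summable (\<lambda>e. u e l)"
  shows "Lop q (\<lambda>l. \<Sum>e. u e l) l = (\<Sum>e. Lop q (u e) l)"
proof (cases l)
  case 0
  then show ?thesis unfolding Lop_def using suminf_mult[OF assms[of 1]] by simp
next
  case (Suc m)
  have "Lop q (\<lambda>l. \<Sum>e. u e l) l =
        (\<Sum>e. of_real (qn q (Suc l)) * u e (Suc l)) - (\<Sum>e. of_real (q ^ m / (1 - q)) * u e m)"
    unfolding Lop_def Suc
    by (simp del: of_real_divide of_real_power add: suminf_mult[OF assms[of "Suc (Suc m)"]] suminf_mult[OF assms[of m]])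
  also have "\<dots> = (\<Sum>e. of_real (qn q (Suc l)) * u e (Suc l) - of_real (q ^ m / (1 - q)) * u e m)"
    by (rule suminf_diff) (intro summable_mult assms)+
  also have "\<dots> = (\<Sum>e. Lop q (u e) l)" unfolding Lop_def Suc by (simp del: of_real_divide of_real_power)
  finally show ?thesis .
qed

lemma Lopn_suminf:
  assumes "\<And>d l. summable (\<lambda>e. (Lop q ^^ d) (u e) l)"
  shows "(Lop q ^^ d) (\<lambda>l. \<Sum>e. u e l) l = (\<Sum>e. (Lop q ^^ d) (u e) l)"
proof (induction d arbitrary: l)
  case 0 then show ?case by simp
next
  case (Suc d)
  have "(Lop q ^^ d) (\<lambda>l. \<Sum>e. u e l) = (\<lambda>l. \<Sum>e. (Lop q ^^ d) (u e) l)"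
    using Suc by (intro ext) simp
  then show ?case using Lop_suminf[of "\<lambda>e. (Lop q ^^ d) (u e)" q l] assms[of d] by simp
qed

lemma Lop_scale: "Lop q (\<lambda>l. a * v l) = (\<lambda>l. a * Lop q v l)"
  by (intro ext) (simp add: Lop_def algebra_simps)

lemma Lopn_scale: "(Lop q ^^ d) (\<lambda>l. a * v l) = (\<lambda>l. a * (Lop q ^^ d) v l)"
  by (induction d) (simp_all add: Lop_scale)

context qs
begin

lemma WB_C_nonneg: "WB q s C b \<Longrightarrow> 0 \<le> C"
  unfolding WB_def using wt_pos[OF q0 s0, of 0]
  by (metis norm_ge_zero order_trans zero_le_mult_iff linorder_not_le less_eq_real_def)

lemma act_Rep:
  assumes R: "Rep q G b" and b: "WB q s C b" and c: "summable (\<lambda>e. norm (c e) * KK q s ^ e)"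
  shows "\<And>x. \<bar>Im x\<bar> < 1 \<Longrightarrow> summable (\<lambda>e. norm (c e * (qderiv q ^^ e) G x))"
    and "Rep q (\<lambda>x. \<Sum>e. c e * (qderiv q ^^ e) G x) (\<lambda>l. \<Sum>e. c e * (Lop q ^^ e) b l)"
    and "WB q s (C * (\<Sum>e. norm (c e) * KK q s ^ e)) (\<lambda>l. \<Sum>e. c e * (Lop q ^^ e) b l)"
proof -
  define K where "K = KK q s"
  define A where "A e = norm (c e) * K ^ e" for e
  have K0: "0 < K" unfolding K_def by (rule KK_pos[OF q0 q1 s0])
  have C0: "0 \<le> C" by (rule WB_C_nonneg[OF b])
  have A: "summable A" unfolding A_def[abs_def] K_def using c .
  have A0: "0 \<le> A e" for e using K0 by (simp add: A_def)
  have IR: "Rep q ((qderiv q ^^ e) G) ((Lop q ^^ e) b)" for e using iter_Rep[OF R b] by blast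
  have IW: "norm ((Lop q ^^ e) b l) \<le> C * K ^ e * wt q s l" for e l
    using iter_Rep[OF R b, of e] unfolding WB_def K_def by blast
  have ce: "norm (c e * (Lop q ^^ e) b l) \<le> A e * (C * wt q s l)" for e l
  proof -
    have "norm (c e * (Lop q ^^ e) b l) \<le> norm (c e) * (C * K ^ e * wt q s l)"
      unfolding norm_mult by (intro mult_left_mono IW) auto
    thus ?thesis by (simp add: A_def mult_ac)
  qed
  have sce: "summable (\<lambda>e. norm (c e * (Lop q ^^ e) b l))" for l
    by (rule summable_comparison_test[OF _ summable_mult2[OF A, of "C * wt q s l"]]) (use ce in auto)
  show "WB q s (C * (\<Sum>e. norm (c e) * KK q s ^ e)) (\<lambda>l. \<Sum>e. c e * (Lop q ^^ e) b l)"
    unfolding WB_def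
  proof
    fix l
    have "norm (\<Sum>e. c e * (Lop q ^^ e) b l) \<le> (\<Sum>e. A e * (C * wt q s l))"
      by (rule norm_suminf_le[OF ce summable_mult2[OF A]])
    also have "\<dots> = (\<Sum>e. A e) * (C * wt q s l)" by (rule suminf_mult2[OF A, symmetric])
    finally show "norm (\<Sum>e. c e * (Lop q ^^ e) b l) \<le> C * (\<Sum>e. norm (c e) * KK q s ^ e) * wt q s l"
      by (simp add: A_def K_def mult_ac)
  qed
  have main: "summable (\<lambda>e. norm (c e * (qderiv q ^^ e) G x)) \<and>
     (\<Sum>e. c e * (qderiv q ^^ e) G x) = PS (\<lambda>l. \<Sum>e. c e * (Lop q ^^ e) b l) x * Eq q x"
    if x: "\<bar>Im x\<bar> < 1" for x
  proof -
    define B where "B l = C * wt q s l * norm x ^ l" for l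
    have B: "summable B" unfolding B_def using summable_mult[OF wt_summable[of "norm x"], of C]
      by (simp add: mult_ac)
    have B0: "0 \<le> B l" for l using C0 wt_pos[OF q0 s0, of l] by (simp add: B_def)
    define \<phi> where "\<phi> e l = c e * ((Lop q ^^ e) b l * x ^ l)" for e l
    have pb: "norm (\<phi> e l) \<le> A e * B l" for e l
    proof -
      have "norm (\<phi> e l) = norm (c e * (Lop q ^^ e) b l) * norm x ^ l"
        by (simp add: \<phi>_def norm_mult norm_power mult_ac)
      also have "\<dots> \<le> A e * (C * wt q s l) * norm x ^ l" by (intro mult_right_mono ce) auto
      finally show ?thesis by (simp add: B_def mult_ac)
    qed
    note S = suminf_swap_prod[OF pb A B A0 B0]
    have WBe: "WB q s (C * K ^ e) ((Lop q ^^ e) b)" for e using IW by (simp add: WB_def)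
    have row: "(\<Sum>l. \<phi> e l) = c e * PS ((Lop q ^^ e) b) x" for e
      unfolding \<phi>_def PS_def by (rule suminf_mult[OF WB_summable[OF WBe]])
    have col: "(\<Sum>e. \<phi> e l) = (\<Sum>e. c e * (Lop q ^^ e) b l) * x ^ l" for l
      unfolding \<phi>_def using suminf_mult2[OF summable_norm_cancel[OF sce[of l]], of "x^l"]
      by (simp add: mult_ac)
    have rowb: "norm (c e * PS ((Lop q ^^ e) b) x) \<le> A e * (\<Sum>l. B l)" for e
    proof -
      have "norm (\<Sum>l. \<phi> e l) \<le> (\<Sum>l. A e * B l)"
        by (rule norm_suminf_le[OF pb summable_mult[OF B]])
      thus ?thesis unfolding row suminf_mult[OF B] .
    qed
    have srow: "summable (\<lambda>e. norm (c e * PS ((Lop q ^^ e) b) x))"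
      by (rule summable_comparison_test[OF _ summable_mult2[OF A]]) (use rowb in auto)
    have dx: "(qderiv q ^^ e) G x = PS ((Lop q ^^ e) b) x * Eq q x" for e
      using IR[of e] x unfolding Rep_def by blast
    have P1: "summable (\<lambda>e. norm (c e * (qderiv q ^^ e) G x))"
      unfolding dx using summable_mult2[OF srow, of "norm (Eq q x)"]
      by (simp add: norm_mult mult_ac)
    have "(\<Sum>e. c e * (qderiv q ^^ e) G x) = (\<Sum>e. c e * PS ((Lop q ^^ e) b) x) * Eq q x"
      unfolding dx using suminf_mult2[OF summable_norm_cancel[OF srow], of "Eq q x"]
      by (simp add: mult_ac)
    also have "(\<Sum>e. c e * PS ((Lop q ^^ e) b) x) = (\<Sum>l. (\<Sum>e. c e * (Lop q ^^ e) b l) * x ^ l)"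
      using S(1) unfolding row col .
    finally have P2: "(\<Sum>e. c e * (qderiv q ^^ e) G x) = PS (\<lambda>l. \<Sum>e. c e * (Lop q ^^ e) b l) x * Eq q x"
      unfolding PS_def .
    show ?thesis using P1 P2 by blast
  qed
  show "\<And>x. \<bar>Im x\<bar> < 1 \<Longrightarrow> summable (\<lambda>e. norm (c e * (qderiv q ^^ e) G x))"
    using main by blast
  show "Rep q (\<lambda>x. \<Sum>e. c e * (qderiv q ^^ e) G x) (\<lambda>l. \<Sum>e. c e * (Lop q ^^ e) b l)"
    unfolding Rep_def using main by blast
qed

end


lemma nonneg_summable_on_iff_nat:
  "(\<lambda>n. norm (g n)) summable_on (UNIV::nat set) \<longleftrightarrow> summable (\<lambda>n. norm (g n))"
  by (rule summable_on_UNIV_nonneg_real_iff) simp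

lemma int_UNIV_split: "(UNIV :: int set) = range int \<union> range (\<lambda>n. - int n - 1)"
proof -
  have "k \<in> range int \<union> range (\<lambda>n. - int n - 1)" for k :: int
  proof (cases "0 \<le> k")
    case True
    hence "k = int (nat k)" by simp
    thus ?thesis by blast
  next
    case False
    hence "k = - int (nat (- k - 1)) - 1" by simp
    thus ?thesis by blast
  qed
  thus ?thesis by blast
qed

lemma int_split_disj: "range int \<inter> range (\<lambda>n. - int n - 1) = {}"
  by auto

lemma Z_split_summable:
  fixes g :: "int \<Rightarrow> 'a::banach"
  shows "(\<lambda>k. norm (g k)) summable_on UNIV \<longleftrightarrow>
         summable (\<lambda>n. norm (g (int n))) \<and> summable (\<lambda>n. norm (g (- int n - 1)))"
proof -
  have i1: "(\<lambda>k. norm (g k)) summable_on range int \<longleftrightarrow> summable (\<lambda>n. norm (g (int n)))"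
    by (subst summable_on_reindex) (auto simp: o_def nonneg_summable_on_iff_nat[of "\<lambda>n. g (int n)"])
  have inj2: "inj (\<lambda>n::nat. - int n - 1)" by (auto simp: inj_def)
  have i2: "(\<lambda>k. norm (g k)) summable_on range (\<lambda>n. - int n - 1) \<longleftrightarrow> summable (\<lambda>n. norm (g (- int n - 1)))"
    by (subst summable_on_reindex[OF inj2]) (auto simp: o_def nonneg_summable_on_iff_nat[of "\<lambda>n. g (- int n - 1)"])
  show ?thesis
  proof
    assume "(\<lambda>k. norm (g k)) summable_on UNIV"
    hence "(\<lambda>k. norm (g k)) summable_on range int" "(\<lambda>k. norm (g k)) summable_on range (\<lambda>n. - int n - 1)"
      by (rule summable_on_subset_banach, simp)+
    thus "summable (\<lambda>n. norm (g (int n))) \<and> summable (\<lambda>n. norm (g (- int n - 1)))"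
      using i1 i2 by simp
  next
    assume "summable (\<lambda>n. norm (g (int n))) \<and> summable (\<lambda>n. norm (g (- int n - 1)))"
    hence "(\<lambda>k. norm (g k)) summable_on (range int \<union> range (\<lambda>n. - int n - 1))"
      using i1 i2 int_split_disj by (intro summable_on_Un_disjoint) auto
    thus "(\<lambda>k. norm (g k)) summable_on UNIV" using int_UNIV_split by simp
  qed
qed

lemma Z_split_infsum:
  fixes g :: "int \<Rightarrow> 'a::banach"
  assumes "(\<lambda>k. norm (g k)) summable_on UNIV"
  shows "infsum g UNIV = (\<Sum>n. g (int n)) + (\<Sum>n. g (- int n - 1))"
proof -
  have s1: "summable (\<lambda>n. norm (g (int n)))" and s2: "summable (\<lambda>n. norm (g (- int n - 1)))"
    using assms Z_split_summable by blast+
  have inj2: "inj (\<lambda>n::nat. - int n - 1)" by (auto simp: inj_def)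
  have a1: "g summable_on range int"
    by (rule summable_on_subset_banach[OF abs_summable_summable[OF assms]]) auto
  have a2: "g summable_on range (\<lambda>n. - int n - 1)"
    by (rule summable_on_subset_banach[OF abs_summable_summable[OF assms]]) auto
  have "infsum g UNIV = infsum g (range int \<union> range (\<lambda>n. - int n - 1))"
    using int_UNIV_split by simp
  also have "\<dots> = infsum g (range int) + infsum g (range (\<lambda>n. - int n - 1))"
    by (rule infsum_Un_disjoint[OF a1 a2 int_split_disj])
  also have "infsum g (range int) = (\<Sum>n. g (int n))"
    by (subst infsum_reindex) (auto simp: o_def intro: infsum_suminf_norm[OF s1])
  also have "infsum g (range (\<lambda>n. - int n - 1)) = (\<Sum>n. g (- int n - 1))"
    by (subst infsum_reindex[OF inj2]) (auto simp: o_def intro: infsum_suminf_norm[OF s2])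
  finally show ?thesis .
qed

lemma Lat_eq: "(UNIV :: int set) \<times> {-1, 1::real} = range (\<lambda>k. (k, 1)) \<union> range (\<lambda>k. (k, -1))"
  by auto

lemma Lat_split_summable:
  fixes f :: "int \<times> real \<Rightarrow> 'a::banach"
  shows "(\<lambda>i. norm (f i)) summable_on (UNIV \<times> {-1,1}) \<longleftrightarrow>
    (\<lambda>k. norm (f (k, 1))) summable_on UNIV \<and> (\<lambda>k. norm (f (k, -1))) summable_on UNIV"
proof -
  have j1: "inj (\<lambda>k::int. (k, 1::real))" "inj (\<lambda>k::int. (k, -1::real))" by (auto simp: inj_def)
  have i1: "(\<lambda>i. norm (f i)) summable_on range (\<lambda>k. (k, 1)) \<longleftrightarrow> (\<lambda>k. norm (f (k, 1))) summable_on UNIV"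
    by (subst summable_on_reindex[OF j1(1)]) (simp add: o_def)
  have i2: "(\<lambda>i. norm (f i)) summable_on range (\<lambda>k. (k, -1)) \<longleftrightarrow> (\<lambda>k. norm (f (k, -1))) summable_on UNIV"
    by (subst summable_on_reindex[OF j1(2)]) (simp add: o_def)
  show ?thesis
  proof
    assume "(\<lambda>i. norm (f i)) summable_on (UNIV \<times> {-1,1})"
    hence "(\<lambda>i. norm (f i)) summable_on range (\<lambda>k. (k, 1))" "(\<lambda>i. norm (f i)) summable_on range (\<lambda>k. (k, -1))"
      by (rule summable_on_subset_banach, force)+
    thus "(\<lambda>k. norm (f (k, 1))) summable_on UNIV \<and> (\<lambda>k. norm (f (k, -1))) summable_on UNIV"
      using i1 i2 by simp
  next
    assume "(\<lambda>k. norm (f (k, 1))) summable_on UNIV \<and> (\<lambda>k. norm (f (k, -1))) summable_on UNIV"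
    hence "(\<lambda>i. norm (f i)) summable_on (range (\<lambda>k. (k, 1)) \<union> range (\<lambda>k. (k, -1)))"
      using i1 i2 by (intro summable_on_Un_disjoint) auto
    thus "(\<lambda>i. norm (f i)) summable_on (UNIV \<times> {-1,1})" using Lat_eq by simp
  qed
qed

lemma Lat_split_infsum:
  fixes f :: "int \<times> real \<Rightarrow> 'a::banach"
  assumes "(\<lambda>i. norm (f i)) summable_on (UNIV \<times> {-1,1})"
  shows "infsum f (UNIV \<times> {-1,1}) = infsum (\<lambda>k. f (k, 1)) UNIV + infsum (\<lambda>k. f (k, -1)) UNIV"
proof -
  have j1: "inj (\<lambda>k::int. (k, 1::real))" "inj (\<lambda>k::int. (k, -1::real))" by (auto simp: inj_def)
  have a: "f summable_on (UNIV \<times> {-1,1})" by (rule abs_summable_summable[OF assms])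
  have a1: "f summable_on range (\<lambda>k. (k, 1))" by (rule summable_on_subset_banach[OF a]) auto
  have a2: "f summable_on range (\<lambda>k. (k, -1))" by (rule summable_on_subset_banach[OF a]) auto
  have "infsum f (UNIV \<times> {-1,1}) = infsum f (range (\<lambda>k. (k, 1)) \<union> range (\<lambda>k. (k, -1)))"
    using Lat_eq by simp
  also have "\<dots> = infsum f (range (\<lambda>k. (k, 1))) + infsum f (range (\<lambda>k. (k, -1)))"
    by (rule infsum_Un_disjoint[OF a1 a2]) auto
  also have "\<dots> = infsum (\<lambda>k. f (k, 1)) UNIV + infsum (\<lambda>k. f (k, -1)) UNIV"
    by (simp add: infsum_reindex[OF j1(1)] infsum_reindex[OF j1(2)] o_def)
  finally show ?thesis .
qed


definition xp :: "real \<Rightarrow> real \<Rightarrow> int \<Rightarrow> real \<Rightarrow> complex" where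
  "xp q \<gamma> k \<epsilon> = complex_of_real (\<epsilon> * q powi k * \<gamma>)"

definition Tm :: "real \<Rightarrow> real \<Rightarrow> (complex \<Rightarrow> complex) \<Rightarrow> nat \<Rightarrow> int \<times> real \<Rightarrow> complex" where
  "Tm q \<gamma> \<phi> m = qint_term q \<gamma> (\<lambda>x. \<phi> x * x ^ m)"

definition InRep :: "real \<Rightarrow> real \<Rightarrow> (complex \<Rightarrow> complex) \<Rightarrow> (nat \<Rightarrow> complex) \<Rightarrow> real \<Rightarrow> real \<Rightarrow> bool" where
  "InRep q \<gamma> \<phi> b \<rho> B \<longleftrightarrow> \<gamma> < \<rho> \<and> 0 \<le> B \<and> (\<forall>n. norm (b n) \<le> B / \<rho> ^ n) \<and>
     (\<forall>k::nat. \<forall>\<epsilon>\<in>{-1,1::real}. (\<lambda>n. b n * xp q \<gamma> (int k) \<epsilon> ^ n) sums \<phi> (xp q \<gamma> (int k) \<epsilon>))"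

definition Dop :: "real \<Rightarrow> (nat \<Rightarrow> complex) \<Rightarrow> nat \<Rightarrow> complex" where
  "Dop q b n = of_real (qn q (Suc n)) * b (Suc n)"

locale ql =
  fixes q \<gamma> :: real
  assumes q0: "0 < q" and q1: "q < 1" and g0: "0 < \<gamma>"
begin

lemma Tm_eq: "Tm q \<gamma> \<phi> m (k, \<epsilon>) = of_real (q powi k * \<gamma>) * (\<phi> (xp q \<gamma> k \<epsilon>) * xp q \<gamma> k \<epsilon> ^ m)"
  by (simp add: Tm_def qint_term_def xp_def)

lemma powi_pos: "0 < q powi k"
  using q0 by (simp add: power_int_def)

lemma xp_norm: "\<epsilon> \<in> {-1,1} \<Longrightarrow> norm (xp q \<gamma> k \<epsilon>) = q powi k * \<gamma>"
  unfolding xp_def norm_of_real using powi_pos[of k] g0 by (auto simp: abs_mult)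

lemma xp_nz: "\<epsilon> \<in> {-1,1} \<Longrightarrow> xp q \<gamma> k \<epsilon> \<noteq> 0"
  unfolding xp_def of_real_eq_0_iff using powi_pos[of k] g0 q0 by auto

lemma xp_succ: "of_real q * xp q \<gamma> k \<epsilon> = xp q \<gamma> (k + 1) \<epsilon>"
  using q0 by (simp add: xp_def power_int_add_1 mult_ac)

lemma powi_le1: "0 \<le> k \<Longrightarrow> q powi k \<le> 1"
  using q0 q1 by (simp add: power_int_def power_le_one)

lemma powi_ge1: "k < 0 \<Longrightarrow> 1 \<le> q powi k"
proof -
  assume k: "k < 0"
  have "q powi k = inverse (q ^ nat (- k))" using k by (simp add: power_int_def power_inverse)
  moreover have "q ^ nat (- k) \<le> 1" "0 < q ^ nat (- k)" using q0 q1 by (auto simp: power_le_one)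
  ultimately show ?thesis by (simp add: one_le_inverse)
qed

lemma qderiv_xp:
  assumes "\<epsilon> \<in> {-1,1}"
  shows "qderiv q \<phi> (xp q \<gamma> k \<epsilon>) = (\<phi> (xp q \<gamma> k \<epsilon>) - \<phi> (xp q \<gamma> (k + 1) \<epsilon>)) / ((1 - of_real q) * xp q \<gamma> k \<epsilon>)"
  using xp_nz[OF assms, of k] by (simp add: qderiv_def xp_succ)

lemma InRep_deriv:
  assumes R: "InRep q \<gamma> \<phi> b \<rho> B"
  shows "InRep q \<gamma> (qderiv q \<phi>) (Dop q b) \<rho> (B / ((1 - q) * \<rho>))"
proof -
  have r: "\<gamma> < \<rho>" "0 \<le> B" "\<And>n. norm (b n) \<le> B / \<rho> ^ n" using R by (auto simp: InRep_def)
  have rho: "0 < \<rho>" using r g0 by simp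
  have bd: "norm (Dop q b n) \<le> B / ((1 - q) * \<rho>) / \<rho> ^ n" for n
  proof -
    have "norm (Dop q b n) = qn q (Suc n) * norm (b (Suc n))"
      using qn_nonneg[OF q0 q1] by (simp add: Dop_def norm_mult)
    also have "\<dots> \<le> (1 / (1 - q)) * (B / \<rho> ^ Suc n)"
      using qn_le[OF q0 q1] qn_nonneg[OF q0 q1] r(3)[of "Suc n"] q1 by (intro mult_mono) auto
    also have "\<dots> = B / ((1 - q) * \<rho>) / \<rho> ^ n" by (simp add: field_simps)
    finally show ?thesis .
  qed
  have sm: "(\<lambda>n. Dop q b n * xp q \<gamma> (int k) \<epsilon> ^ n) sums qderiv q \<phi> (xp q \<gamma> (int k) \<epsilon>)"
    if e: "\<epsilon> \<in> {-1,1}" for k \<epsilon>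
  proof -
    define x where "x = xp q \<gamma> (int k) \<epsilon>"
    define y where "y = xp q \<gamma> (int (Suc k)) \<epsilon>"
    have y: "y = of_real q * x" unfolding x_def y_def xp_succ by (simp add: add.commute)
    have x0: "x \<noteq> 0" unfolding x_def by (rule xp_nz[OF e])
    have q1': "1 - complex_of_real q \<noteq> 0" using q1 by (metis eq_iff_diff_eq_0 of_real_1 of_real_eq_iff less_irrefl)
    define d where "d = (1 - complex_of_real q) * x"
    have d0: "d \<noteq> 0" using x0 q1' by (simp add: d_def)
    have Sx: "(\<lambda>n. b n * x ^ n) sums \<phi> x" using R e unfolding InRep_def x_def by blast
    have Sy: "(\<lambda>n. b n * y ^ n) sums \<phi> y" using R e unfolding InRep_def y_def by blast
    define t where "t n = (b n * x ^ n - b n * y ^ n) / d" for n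
    have St: "t sums ((\<phi> x - \<phi> y) / d)" unfolding t_def by (intro sums_divide sums_diff Sx Sy)
    have t0: "t 0 = 0" by (simp add: t_def)
    have tS: "t (Suc m) = Dop q b m * x ^ m" for m
    proof -
      have "t (Suc m) = b (Suc m) * x ^ m * ((1 - of_real q ^ Suc m) * x) / d"
        unfolding t_def y by (simp add: power_mult_distrib algebra_simps)
      also have "\<dots> = b (Suc m) * x ^ m * ((1 - of_real q ^ Suc m) / (1 - of_real q))"
        unfolding d_def using x0 q1' by (simp add: field_simps)
      also have "(1 - complex_of_real q ^ Suc m) / (1 - of_real q) = of_real (qn q (Suc m))"
        by (simp add: qn_def)
      finally show ?thesis by (simp add: Dop_def mult_ac)
    qed
    have "(\<lambda>m. t (Suc m)) sums ((\<phi> x - \<phi> y) / d)" using St t0 by (simp add: sums_Suc_iff)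
    hence "(\<lambda>m. Dop q b m * x ^ m) sums ((\<phi> x - \<phi> y) / d)" unfolding tS .
    moreover have "qderiv q \<phi> x = (\<phi> x - \<phi> y) / d"
      unfolding x_def y_def d_def qderiv_xp[OF e] by (simp add: add.commute)
    ultimately show ?thesis unfolding x_def by simp
  qed
  show ?thesis unfolding InRep_def
    using r bd sm rho q1 by (auto intro!: divide_nonneg_pos mult_pos_pos)
qed

lemma InRep_bound:
  assumes R: "InRep q \<gamma> \<phi> b \<rho> B" and e: "\<epsilon> \<in> {-1,1}"
  shows "norm (\<phi> (xp q \<gamma> (int k) \<epsilon>)) \<le> B * \<rho> / (\<rho> - \<gamma>)"
proof -
  have r: "\<gamma> < \<rho>" "0 \<le> B" "\<And>n. norm (b n) \<le> B / \<rho> ^ n" using R by (auto simp: InRep_def)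
  have rho: "0 < \<rho>" using r g0 by simp
  define x where "x = xp q \<gamma> (int k) \<epsilon>"
  have Sx: "(\<lambda>n. b n * x ^ n) sums \<phi> x" using R e unfolding InRep_def x_def by blast
  have nx: "norm x \<le> \<gamma>" unfolding x_def xp_norm[OF e] using powi_le1[of "int k"] g0
    by (simp add: mult_left_le_one_le)
  have g: "\<gamma> / \<rho> < 1" "0 \<le> \<gamma> / \<rho>" using r rho g0 by auto
  have tb: "norm (b n * x ^ n) \<le> B * (\<gamma> / \<rho>) ^ n" for n
  proof -
    have "norm (b n * x ^ n) \<le> (B / \<rho> ^ n) * \<gamma> ^ n"
      unfolding norm_mult norm_power using r(3)[of n] nx
      by (intro mult_mono power_mono) (use rho r(2) in auto)
    thus ?thesis by (simp add: power_divide)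
  qed
  have "norm (\<phi> x) = norm (\<Sum>n. b n * x ^ n)" using Sx by (simp add: sums_iff)
  also have "\<dots> \<le> (\<Sum>n. B * (\<gamma> / \<rho>) ^ n)"
    by (rule norm_suminf_le[OF tb]) (intro summable_mult summable_geometric, use g in auto)
  also have "\<dots> = B * (1 / (1 - \<gamma> / \<rho>))" using g by (simp add: suminf_mult suminf_geometric)
  also have "\<dots> = B * \<rho> / (\<rho> - \<gamma>)" using rho r by (simp add: field_simps)
  finally show ?thesis unfolding x_def .
qed

lemma InRep_lim:
  assumes R: "InRep q \<gamma> \<phi> b \<rho> B" and e: "\<epsilon> \<in> {-1,1}"
  shows "(\<lambda>k. \<phi> (xp q \<gamma> (int k) \<epsilon>)) \<longlonglongrightarrow> b 0"
proof -
  have r: "\<gamma> < \<rho>" "0 \<le> B" "\<And>n. norm (b n) \<le> B / \<rho> ^ n" using R by (auto simp: InRep_def)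
  have rho: "0 < \<rho>" using r g0 by simp
  define P where "P z = (\<Sum>n. b n * z ^ n)" for z
  have sg: "summable (\<lambda>n. b n * of_real \<gamma> ^ n)"
  proof (rule summable_norm_cancel, rule summable_comparison_test[OF _ summable_mult[OF summable_geometric[of "\<gamma>/\<rho>"], of B]])
    show "norm (\<gamma> / \<rho>) < 1" using r rho g0 by auto
    have "norm (norm (b n * of_real \<gamma> ^ n)) \<le> B * (\<gamma> / \<rho>) ^ n" for n
    proof -
      have "norm (b n * of_real \<gamma> ^ n) \<le> (B / \<rho> ^ n) * \<gamma> ^ n"
        unfolding norm_mult norm_power using r(3)[of n] g0 rho r(2) by (intro mult_mono) auto
      thus ?thesis by (simp add: power_divide)
    qed
    thus "\<exists>N. \<forall>n\<ge>N. norm (norm (b n * of_real \<gamma> ^ n)) \<le> B * (\<gamma> / \<rho>) ^ n" by blast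
  qed
  have cont: "isCont P 0" unfolding P_def[abs_def]
    by (rule isCont_powser[OF sg]) (use g0 in simp)
  have xl: "(\<lambda>k. xp q \<gamma> (int k) \<epsilon>) \<longlonglongrightarrow> 0"
  proof -
    have "(\<lambda>k. complex_of_real (\<epsilon> * q ^ k * \<gamma>)) \<longlonglongrightarrow> of_real (\<epsilon> * 0 * \<gamma>)"
      using q0 q1 by (intro tendsto_of_real tendsto_mult tendsto_const LIMSEQ_power_zero) auto
    thus ?thesis by (simp add: xp_def)
  qed
  have "(\<lambda>k. P (xp q \<gamma> (int k) \<epsilon>)) \<longlonglongrightarrow> P 0"
    by (rule isCont_tendsto_compose[OF cont xl])
  moreover have "P (xp q \<gamma> (int k) \<epsilon>) = \<phi> (xp q \<gamma> (int k) \<epsilon>)" for k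
    using R e unfolding InRep_def P_def by (metis sums_unique)
  moreover have "P 0 = b 0" unfolding P_def by (simp add: powser_zero)
  ultimately show ?thesis by simp
qed

end


definition sh :: "int \<times> real \<Rightarrow> int \<times> real" where "sh i = (fst i + 1, snd i)"

definition NN :: "real \<Rightarrow> real \<Rightarrow> (complex \<Rightarrow> complex) \<Rightarrow> nat \<Rightarrow> real" where
  "NN q \<gamma> \<phi> m = infsum (\<lambda>i. norm (Tm q \<gamma> \<phi> m i)) (UNIV \<times> {-1,1})"

definition Gf :: "real \<Rightarrow> real \<Rightarrow> nat \<Rightarrow> int \<times> real \<Rightarrow> real" where
  "Gf q \<gamma> m i = (if 0 \<le> fst i then q powi fst i * \<gamma> ^ Suc m else 0)"

definition Isum :: "real \<Rightarrow> real \<Rightarrow> (complex \<Rightarrow> complex) \<Rightarrow> bool" where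
  "Isum q \<gamma> \<phi> \<longleftrightarrow> (\<forall>m. (\<lambda>i. norm (Tm q \<gamma> \<phi> m i)) summable_on (UNIV \<times> {-1,1}))"

lemma Isum_I_inf: "Isum q \<gamma> \<phi> \<longleftrightarrow> \<phi> \<in> I_inf q \<gamma>"
  by (simp add: Isum_def I_inf_def Tm_def)

lemma sh_bij: "bij_betw sh (UNIV \<times> {-1,1::real}) (UNIV \<times> {-1,1})"
  by (rule bij_betw_byWitness[where f'="\<lambda>i. (fst i - 1, snd i)"]) (auto simp: sh_def image_def)

lemma sh_summable:
  fixes f :: "int \<times> real \<Rightarrow> 'a::{real_normed_vector}"
  shows "(\<lambda>i. f (sh i)) summable_on (UNIV \<times> {-1,1}) \<longleftrightarrow> f summable_on (UNIV \<times> {-1,1})"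
  by (rule summable_on_reindex_bij_betw[OF sh_bij])

lemma sh_infsum:
  fixes f :: "int \<times> real \<Rightarrow> 'a::{real_normed_vector}"
  shows "infsum (\<lambda>i. f (sh i)) (UNIV \<times> {-1,1}) = infsum f (UNIV \<times> {-1,1})"
  by (rule infsum_reindex_bij_betw[OF sh_bij])

context ql
begin

lemma Gf_nonneg: "0 \<le> Gf q \<gamma> m i"
  using powi_pos g0 by (simp add: Gf_def less_imp_le)

lemma Gf_summable: "Gf q \<gamma> m summable_on (UNIV \<times> {-1,1})"
proof -
  have z: "(\<lambda>k. norm (Gf q \<gamma> m (k, \<epsilon>))) summable_on UNIV" for \<epsilon>
  proof (subst Z_split_summable, intro conjI)
    show "summable (\<lambda>n. norm (Gf q \<gamma> m (int n, \<epsilon>)))"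
      using q0 q1 g0 by (simp add: Gf_def summable_mult2 summable_geometric)
    show "summable (\<lambda>n. norm (Gf q \<gamma> m (- int n - 1, \<epsilon>)))"
      by (simp add: Gf_def)
  qed
  have "(\<lambda>i. norm (Gf q \<gamma> m i)) summable_on (UNIV \<times> {-1,1})"
    using z by (subst Lat_split_summable) simp
  thus ?thesis using Gf_nonneg by simp
qed

definition GG :: "nat \<Rightarrow> real" where "GG m = infsum (Gf q \<gamma> m) (UNIV \<times> {-1,1})"

lemma deriv_pointwise:
  assumes R: "InRep q \<gamma> \<phi> b \<rho> B" and e: "\<epsilon> \<in> {-1,1}"
  shows "norm (Tm q \<gamma> (qderiv q \<phi>) m (k, \<epsilon>)) \<le>
    (B / ((1 - q) * \<rho>) * \<rho> / (\<rho> - \<gamma>)) * Gf q \<gamma> m (k, \<epsilon>)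
    + (1 / ((1 - q) * \<gamma>)) * (norm (Tm q \<gamma> \<phi> m (k, \<epsilon>)) + inverse (q ^ Suc m) * norm (Tm q \<gamma> \<phi> m (sh (k, \<epsilon>))))"
    (is "?L \<le> ?A * _ + ?c * (?N1 + ?qi * ?N2)")
proof -
  have r: "\<gamma> < \<rho>" "0 \<le> B" using R by (auto simp: InRep_def)
  have A0: "0 \<le> ?A" using r q1 g0 by (auto intro!: divide_nonneg_pos mult_nonneg_nonneg)
  have c0: "0 \<le> ?c" using q1 g0 by simp
  have qi0: "0 \<le> ?qi" using q0 by simp
  define a where "a = q powi k * \<gamma>"
  have a0: "0 < a" using powi_pos g0 by (simp add: a_def)
  define x where "x = xp q \<gamma> k \<epsilon>"
  define x' where "x' = xp q \<gamma> (k + 1) \<epsilon>"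
  have nx: "norm x = a" unfolding x_def a_def by (rule xp_norm[OF e])
  have L: "?L = a * norm (qderiv q \<phi> x) * a ^ m"
    unfolding Tm_eq x_def[symmetric] a_def[symmetric] using a0 nx
    by (simp add: norm_mult norm_power)
  show ?thesis
  proof (cases "0 \<le> k")
    case True
    then obtain n where kn: "k = int n" by (metis nonneg_eq_int)
    have "norm (qderiv q \<phi> x) \<le> ?A"
      using InRep_bound[OF InRep_deriv[OF R] e, of n] unfolding x_def kn .
    hence h1: "a * norm (qderiv q \<phi> x) \<le> a * ?A" using a0 by (intro mult_left_mono) auto
    have "a \<le> \<gamma>" unfolding a_def using powi_le1[OF True] g0 by (simp add: mult_left_le_one_le)
    hence h2: "a ^ m \<le> \<gamma> ^ m" using a0 by (intro power_mono) auto
    have aA0: "0 \<le> a * ?A" using A0 a0 by (intro mult_nonneg_nonneg) auto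
    have "?L \<le> a * ?A * \<gamma> ^ m"
      unfolding L by (rule mult_mono[OF h1 h2]) (use aA0 a0 in auto)
    also have "\<dots> = ?A * Gf q \<gamma> m (k, \<epsilon>)" using True by (simp add: Gf_def a_def mult_ac)
    finally show ?thesis
      using c0 qi0 by (smt (verit, best) mult_nonneg_nonneg norm_ge_zero)
  next
    case False
    have ag: "\<gamma> \<le> a" unfolding a_def using powi_ge1[of k] False g0 by simp
    have n1: "norm (1 - complex_of_real q) = 1 - q"
      by (metis abs_of_pos diff_gt_0_iff_gt norm_of_real of_real_1 of_real_diff q1)
    have "norm (qderiv q \<phi> x) = norm (\<phi> x - \<phi> x') / ((1 - q) * a)"
      unfolding x_def x'_def qderiv_xp[OF e] using nx q1 n1
      by (simp add: norm_mult norm_divide x_def abs_of_pos)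
    also have "\<dots> \<le> (norm (\<phi> x) + norm (\<phi> x')) * ((1/(1 - q)) * (1 / \<gamma>))"
    proof -
      have "1 / ((1 - q) * a) \<le> (1/(1 - q)) * (1 / \<gamma>)"
        using ag g0 q1 by (simp add: frac_le divide_simps mult_left_mono)
      moreover have "0 \<le> 1 / ((1 - q) * a)" using a0 q1 by simp
      moreover have "norm (\<phi> x - \<phi> x') / ((1 - q) * a) = norm (\<phi> x - \<phi> x') * (1 / ((1 - q) * a))"
        by simp
      ultimately show ?thesis
        using mult_mono[OF norm_triangle_ineq4[of "\<phi> x" "\<phi> x'"], of "1 / ((1 - q) * a)" "(1/(1 - q)) * (1 / \<gamma>)"]
        by simp
    qed
    finally have d: "norm (qderiv q \<phi> x) \<le> (norm (\<phi> x) + norm (\<phi> x')) * ?c" by (simp add: field_simps)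
    have N1: "?N1 = a * norm (\<phi> x) * a ^ m"
      unfolding Tm_eq x_def[symmetric] a_def[symmetric] using a0 nx by (simp add: norm_mult norm_power)
    have xs: "norm x' = q * a" unfolding x'_def xp_norm[OF e] a_def using q0
      by (simp add: power_int_add_1 mult_ac)
    have "q powi (k+1) * \<gamma> = q * a" using q0 by (simp add: a_def power_int_add_1 mult_ac)
    hence nr: "norm (complex_of_real (q powi (k+1) * \<gamma>)) = q * a"
      using q0 a0 by (simp only: norm_of_real) simp
    have N2: "?N2 = (q * a) * norm (\<phi> x') * (q * a) ^ m"
      unfolding sh_def fst_conv snd_conv Tm_eq norm_mult norm_power nr x'_def[symmetric] xs
      by (simp add: mult_ac)
    have N2': "?qi * ?N2 = a * norm (\<phi> x') * a ^ m"
      unfolding N2 using q0 by (simp add: power_mult_distrib field_simps)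
    have "?L \<le> a * ((norm (\<phi> x) + norm (\<phi> x')) * ?c) * a ^ m"
      unfolding L using d a0 by (intro mult_right_mono mult_left_mono) auto
    also have "\<dots> = ?c * (?N1 + ?qi * ?N2)" unfolding N1 N2' by (simp add: algebra_simps add_divide_distrib)
    finally show ?thesis using A0 Gf_nonneg[of m "(k, \<epsilon>)"] by (smt (verit) mult_nonneg_nonneg)
  qed
qed

lemma deriv_Isum_NN:
  assumes R: "InRep q \<gamma> \<phi> b \<rho> B" and S: "Isum q \<gamma> \<phi>"
  shows "(\<lambda>i. norm (Tm q \<gamma> (qderiv q \<phi>) m i)) summable_on (UNIV \<times> {-1,1})"
    and "NN q \<gamma> (qderiv q \<phi>) m \<le> (B / ((1 - q) * \<rho>) * \<rho> / (\<rho> - \<gamma>)) * GG m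
           + (1 / ((1 - q) * \<gamma>)) * (1 + inverse (q ^ Suc m)) * NN q \<gamma> \<phi> m"
proof -
  let ?A = "B / ((1 - q) * \<rho>) * \<rho> / (\<rho> - \<gamma>)" and ?c = "1 / ((1 - q) * \<gamma>)" and ?qi = "inverse (q ^ Suc m)"
  define N0 where "N0 i = norm (Tm q \<gamma> \<phi> m i)" for i
  define H where "H i = ?A * Gf q \<gamma> m i + ?c * (N0 i + ?qi * N0 (sh i))" for i
  have s0: "N0 summable_on (UNIV \<times> {-1,1})" using S by (simp add: Isum_def N0_def[abs_def])
  have s1: "(\<lambda>i. N0 (sh i)) summable_on (UNIV \<times> {-1,1})" using s0 by (simp add: sh_summable)
  have sG: "(\<lambda>i. ?A * Gf q \<gamma> m i) summable_on (UNIV \<times> {-1,1})"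
    by (intro summable_on_cmult_right Gf_summable)
  have s2: "(\<lambda>i. ?qi * N0 (sh i)) summable_on (UNIV \<times> {-1,1})" by (intro summable_on_cmult_right s1)
  have s3: "(\<lambda>i. N0 i + ?qi * N0 (sh i)) summable_on (UNIV \<times> {-1,1})" by (intro summable_on_add s0 s2)
  have s4: "(\<lambda>i. ?c * (N0 i + ?qi * N0 (sh i))) summable_on (UNIV \<times> {-1,1})" by (intro summable_on_cmult_right s3)
  have sH: "H summable_on (UNIV \<times> {-1,1})" unfolding H_def by (intro summable_on_add sG s4)
  have le: "norm (Tm q \<gamma> (qderiv q \<phi>) m i) \<le> H i" if "i \<in> UNIV \<times> {-1,1}" for i
  proof -
    have e: "snd i \<in> {-1,1}" using that by auto
    show ?thesis using deriv_pointwise[OF R e, of m "fst i"] unfolding H_def N0_def by simp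
  qed
  show sd: "(\<lambda>i. norm (Tm q \<gamma> (qderiv q \<phi>) m i)) summable_on (UNIV \<times> {-1,1})"
    by (rule summable_on_comparison_test[OF sH le]) auto
  have "NN q \<gamma> (qderiv q \<phi>) m \<le> infsum H (UNIV \<times> {-1,1})"
    unfolding NN_def by (rule infsum_mono[OF sd sH le])
  also have "infsum H (UNIV \<times> {-1,1}) = ?A * GG m + ?c * (NN q \<gamma> \<phi> m + ?qi * NN q \<gamma> \<phi> m)"
  proof -
    have "infsum H (UNIV \<times> {-1,1}) = infsum (\<lambda>i. ?A * Gf q \<gamma> m i) (UNIV \<times> {-1,1}) +
          infsum (\<lambda>i. ?c * (N0 i + ?qi * N0 (sh i))) (UNIV \<times> {-1,1})"
      unfolding H_def by (rule infsum_add[OF sG s4])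
    also have "infsum (\<lambda>i. ?A * Gf q \<gamma> m i) (UNIV \<times> {-1,1}) = ?A * GG m"
      unfolding GG_def by (rule infsum_cmult_right) (rule Gf_summable)
    also have "infsum (\<lambda>i. ?c * (N0 i + ?qi * N0 (sh i))) (UNIV \<times> {-1,1})
             = ?c * (infsum N0 (UNIV \<times> {-1,1}) + ?qi * infsum (\<lambda>i. N0 (sh i)) (UNIV \<times> {-1,1}))"
    proof -
      have "infsum (\<lambda>i. ?c * (N0 i + ?qi * N0 (sh i))) (UNIV \<times> {-1,1})
          = ?c * infsum (\<lambda>i. N0 i + ?qi * N0 (sh i)) (UNIV \<times> {-1,1})" by (rule infsum_cmult_right')
      also have "infsum (\<lambda>i. N0 i + ?qi * N0 (sh i)) (UNIV \<times> {-1,1})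
          = infsum N0 (UNIV \<times> {-1,1}) + infsum (\<lambda>i. ?qi * N0 (sh i)) (UNIV \<times> {-1,1})"
        by (rule infsum_add[OF s0 s2])
      also have "infsum (\<lambda>i. ?qi * N0 (sh i)) (UNIV \<times> {-1,1}) = ?qi * infsum (\<lambda>i. N0 (sh i)) (UNIV \<times> {-1,1})"
        by (rule infsum_cmult_right')
      finally show ?thesis .
    qed
    also have "infsum (\<lambda>i. N0 (sh i)) (UNIV \<times> {-1,1}) = infsum N0 (UNIV \<times> {-1,1})" by (rule sh_infsum)
    finally show ?thesis by (simp add: NN_def N0_def[abs_def])
  qed
  finally show "NN q \<gamma> (qderiv q \<phi>) m \<le> ?A * GG m + ?c * (1 + ?qi) * NN q \<gamma> \<phi> m"
    by (simp add: algebra_simps)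
qed

end


lemma qfact_Suc: "q \<noteq> 1 \<Longrightarrow> qfact q (Suc k) = qfact q k * qn q (Suc k)"
  by (simp add: qfact_def qn_def qpoch_Suc field_simps)

lemma tri_Suc: "((Suc m)^2 + Suc m) div 2 = (m^2 + m) div 2 + Suc m"
proof -
  have "(Suc m)^2 + Suc m = (m^2 + m) + 2 * Suc m" by (simp add: power2_eq_square)
  thus ?thesis by simp
qed

context ql
begin

definition th :: "real \<Rightarrow> real" where "th \<rho> = 1 / ((1 - q) * \<rho>)"
definition Rm :: "real \<Rightarrow> real \<Rightarrow> nat \<Rightarrow> real" where
  "Rm \<rho> B m = (1 / ((1 - q) * \<gamma>)) * (1 + inverse (q ^ Suc m)) + th \<rho> * \<rho> / (\<rho> - \<gamma>) * GG m + th \<rho>"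

lemma NN_nonneg: "0 \<le> NN q \<gamma> \<phi> m"
  unfolding NN_def by (rule infsum_nonneg) simp

lemma GG_nonneg: "0 \<le> GG m"
  unfolding GG_def by (rule infsum_nonneg) (rule Gf_nonneg)

lemma iter_lat:
  assumes R: "InRep q \<gamma> g b \<rho> B" and S: "Isum q \<gamma> g"
  shows "InRep q \<gamma> ((qderiv q ^^ d) g) ((Dop q ^^ d) b) \<rho> (B * th \<rho> ^ d) \<and> Isum q \<gamma> ((qderiv q ^^ d) g)
     \<and> NN q \<gamma> ((qderiv q ^^ d) g) m + B * th \<rho> ^ d \<le> (NN q \<gamma> g m + B) * Rm \<rho> B m ^ d"
proof (induction d)
  case 0 then show ?case using R S by simp
next
  case (Suc d)
  let ?\<phi> = "(qderiv q ^^ d) g"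
  have r: "\<gamma> < \<rho>" "0 \<le> B" using R by (auto simp: InRep_def)
  have rho: "0 < \<rho>" using r g0 by simp
  have th0: "0 < th \<rho>" using rho q1 by (simp add: th_def)
  have IR: "InRep q \<gamma> ?\<phi> ((Dop q ^^ d) b) \<rho> (B * th \<rho> ^ d)" and IS: "Isum q \<gamma> ?\<phi>"
    and IN: "NN q \<gamma> ?\<phi> m + B * th \<rho> ^ d \<le> (NN q \<gamma> g m + B) * Rm \<rho> B m ^ d" using Suc by auto
  have eqB: "B * th \<rho> ^ d / ((1 - q) * \<rho>) = B * th \<rho> ^ Suc d" by (simp add: th_def field_simps)
  have R': "InRep q \<gamma> (qderiv q ?\<phi>) (Dop q ((Dop q ^^ d) b)) \<rho> (B * th \<rho> ^ Suc d)"
    using InRep_deriv[OF IR] unfolding eqB .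
  have S': "Isum q \<gamma> (qderiv q ?\<phi>)" unfolding Isum_def using deriv_Isum_NN(1)[OF IR IS] by blast
  let ?\<alpha> = "(1 / ((1 - q) * \<gamma>)) * (1 + inverse (q ^ Suc m))"
  let ?\<beta> = "th \<rho> * \<rho> / (\<rho> - \<gamma>) * GG m"
  have a0: "0 \<le> ?\<alpha>" using q0 q1 g0 by simp
  have b0: "0 \<le> ?\<beta>" using th0 rho r GG_nonneg[of m] by simp
  have N': "NN q \<gamma> (qderiv q ?\<phi>) m \<le> ?\<beta> * (B * th \<rho> ^ d) + ?\<alpha> * NN q \<gamma> ?\<phi> m"
    using deriv_Isum_NN(2)[OF IR IS, of m] unfolding eqB by (simp add: th_def field_simps)
  have X: "0 \<le> B * th \<rho> ^ d" "0 \<le> NN q \<gamma> ?\<phi> m" using r th0 NN_nonneg by auto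
  have "NN q \<gamma> (qderiv q ?\<phi>) m + B * th \<rho> ^ Suc d
       \<le> ?\<alpha> * NN q \<gamma> ?\<phi> m + (?\<beta> + th \<rho>) * (B * th \<rho> ^ d)"
    using N' by (simp add: algebra_simps)
  also have "\<dots> \<le> Rm \<rho> B m * (NN q \<gamma> ?\<phi> m + B * th \<rho> ^ d)"
  proof -
    have "?\<alpha> * NN q \<gamma> ?\<phi> m \<le> Rm \<rho> B m * NN q \<gamma> ?\<phi> m"
      using X b0 th0 by (intro mult_right_mono) (auto simp: Rm_def)
    moreover have "(?\<beta> + th \<rho>) * (B * th \<rho> ^ d) \<le> Rm \<rho> B m * (B * th \<rho> ^ d)"
      using X a0 by (intro mult_right_mono) (auto simp: Rm_def)
    ultimately show ?thesis by (simp add: algebra_simps)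
  qed
  also have "\<dots> \<le> Rm \<rho> B m * ((NN q \<gamma> g m + B) * Rm \<rho> B m ^ d)"
    using IN a0 b0 th0 by (intro mult_left_mono) (auto simp: Rm_def)
  finally have "NN q \<gamma> (qderiv q ?\<phi>) m + B * th \<rho> ^ Suc d \<le> (NN q \<gamma> g m + B) * Rm \<rho> B m ^ Suc d"
    by (simp add: mult_ac)
  then show ?case using R' S' by simp
qed

lemma Rm_nonneg:
  assumes "\<gamma> < \<rho>" shows "0 \<le> Rm \<rho> B m"
  using assms q0 q1 g0 GG_nonneg[of m] by (simp add: Rm_def th_def)

end


lemma alg1: "(P::complex) \<noteq> 0 \<Longrightarrow> d \<noteq> 0 \<Longrightarrow> T * P * (d * ((1 + - inverse P) * inverse d * S)) = - ((1 - P) / d) * (T * (d * S))"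
  by (simp add: field_simps)

lemma alg2: "(x::complex) \<noteq> 0 \<Longrightarrow> d \<noteq> 0 \<Longrightarrow> Q \<noteq> 0 \<Longrightarrow>
  a * ((u - v) / (d * x) * x ^ Suc m) = (a * (u * x ^ m) + (- inverse (Q ^ Suc m)) * ((Q * a) * (v * (Q * x) ^ m))) * inverse d"
  by (simp add: field_simps power_mult_distrib)

context ql
begin

lemma q1c: "1 - complex_of_real q \<noteq> 0"
  using q1 by (metis eq_iff_diff_eq_0 of_real_1 of_real_eq_iff less_irrefl)

lemma Tm_summable:
  assumes S: "Isum q \<gamma> \<phi>"
  shows "Tm q \<gamma> \<phi> m summable_on (UNIV \<times> {-1,1})"
  using S unfolding Isum_def by (intro abs_summable_summable[of "Tm q \<gamma> \<phi> m"]) blast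

lemma ibp_pointwise:
  assumes e: "\<epsilon> \<in> {-1,1}"
  shows "Tm q \<gamma> (qderiv q \<phi>) (Suc m) (k, \<epsilon>) =
     (Tm q \<gamma> \<phi> m (k, \<epsilon>) + (- of_real (inverse (q ^ Suc m))) * Tm q \<gamma> \<phi> m (sh (k, \<epsilon>))) * inverse (1 - of_real q)"
proof -
  define x where "x = xp q \<gamma> k \<epsilon>"
  define a where "a = complex_of_real (q powi k * \<gamma>)"
  have x0: "x \<noteq> 0" unfolding x_def by (rule xp_nz[OF e])
  have x': "xp q \<gamma> (k + 1) \<epsilon> = of_real q * x" unfolding x_def xp_succ ..
  have a': "complex_of_real (q powi (k + 1) * \<gamma>) = of_real q * a"
    unfolding a_def using q0 by (simp add: power_int_add_1 mult_ac)
  have qn0: "complex_of_real q \<noteq> 0" using q0 by simp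
  have D: "qderiv q \<phi> x = (\<phi> x - \<phi> (of_real q * x)) / ((1 - of_real q) * x)"
    using qderiv_xp[OF e, of \<phi> k] by (simp only: x_def[symmetric] x')
  have L: "Tm q \<gamma> (qderiv q \<phi>) (Suc m) (k, \<epsilon>) = a * ((\<phi> x - \<phi> (of_real q * x)) / ((1 - of_real q) * x) * x ^ Suc m)"
    unfolding Tm_eq x_def[symmetric] a_def[symmetric] D ..
  have T1: "Tm q \<gamma> \<phi> m (k, \<epsilon>) = a * (\<phi> x * x ^ m)"
    unfolding Tm_eq x_def[symmetric] a_def[symmetric] ..
  have T2: "Tm q \<gamma> \<phi> m (sh (k, \<epsilon>)) = (of_real q * a) * (\<phi> (of_real q * x) * (of_real q * x) ^ m)"
    unfolding sh_def fst_conv snd_conv Tm_eq a' x' ..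
  show ?thesis unfolding L T1 T2 of_real_inverse of_real_power
    by (rule alg2[OF x0 q1c qn0])
qed

lemma ibp_Suc:
  assumes R: "InRep q \<gamma> \<phi> b \<rho> B" and S: "Isum q \<gamma> \<phi>"
  shows "qmoment q \<gamma> (Suc m) (qderiv q \<phi>) = - of_real (qn q (Suc m)) * qmoment q \<gamma> m \<phi>"
proof -
  let ?T = "Tm q \<gamma> \<phi> m"
  let ?c = "- complex_of_real (inverse (q ^ Suc m))"
  let ?e = "inverse (1 - complex_of_real q)"
  have s0: "?T summable_on (UNIV \<times> {-1,1})" by (rule Tm_summable[OF S])
  have s1: "(\<lambda>i. ?T (sh i)) summable_on (UNIV \<times> {-1,1})" using s0 by (simp add: sh_summable)
  have s2: "(\<lambda>i. ?c * ?T (sh i)) summable_on (UNIV \<times> {-1,1})" by (intro summable_on_cmult_right s1)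
  have "infsum (Tm q \<gamma> (qderiv q \<phi>) (Suc m)) (UNIV \<times> {-1,1})
      = infsum (\<lambda>i. (?T i + ?c * ?T (sh i)) * ?e) (UNIV \<times> {-1,1})"
    by (rule infsum_cong) (use ibp_pointwise in auto)
  also have "\<dots> = (infsum ?T (UNIV \<times> {-1,1}) + ?c * infsum (\<lambda>i. ?T (sh i)) (UNIV \<times> {-1,1})) * ?e"
    by (simp only: infsum_cmult_left' infsum_add[OF s0 s2] infsum_cmult_right')
  also have "infsum (\<lambda>i. ?T (sh i)) (UNIV \<times> {-1,1}) = infsum ?T (UNIV \<times> {-1,1})" by (rule sh_infsum)
  finally have I: "infsum (Tm q \<gamma> (qderiv q \<phi>) (Suc m)) (UNIV \<times> {-1,1}) =
      (1 + ?c) * ?e * infsum ?T (UNIV \<times> {-1,1})" by (simp add: algebra_simps)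
  define S0 where "S0 = infsum ?T (UNIV \<times> {-1,1})"
  define t where "t = (m^2 + m) div 2"
  have L0: "qmoment q \<gamma> (Suc m) (qderiv q \<phi>) =
      of_real (q ^ (t + Suc m)) * (of_real (1 - q) * infsum (Tm q \<gamma> (qderiv q \<phi>) (Suc m)) (UNIV \<times> {-1,1}))"
    unfolding qmoment_def qint_def tri_Suc t_def[symmetric] Tm_def ..
  have L: "qmoment q \<gamma> (Suc m) (qderiv q \<phi>) =
      of_real (q ^ (t + Suc m)) * (of_real (1 - q) * ((1 + ?c) * ?e * S0))"
    unfolding L0 I S0_def ..
  have Rr: "qmoment q \<gamma> m \<phi> = of_real (q ^ t) * (of_real (1 - q) * S0)"
    unfolding qmoment_def qint_def t_def S0_def Tm_def ..
  have qn0: "complex_of_real q \<noteq> 0" using q0 by simp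
  have P0: "complex_of_real q ^ Suc m \<noteq> 0" using qn0 by simp
  have e1: "complex_of_real (q ^ (t + Suc m)) = of_real q ^ t * of_real q ^ Suc m" by (simp add: power_add)
  have e2: "complex_of_real (1 - q) = 1 - of_real q" by simp
  have e3: "complex_of_real (qn q (Suc m)) = (1 - of_real q ^ Suc m) / (1 - of_real q)"
    by (simp add: qn_def)
  show ?thesis unfolding L Rr e2 e3 power_add of_real_mult of_real_inverse of_real_power
    by (rule alg1[OF P0 q1c])
qed

end


context ql
begin

lemma ibp0_pointwise:
  assumes e: "\<epsilon> \<in> {-1,1}"
  shows "Tm q \<gamma> (qderiv q \<phi>) 0 (k, \<epsilon>) =
     (of_real \<epsilon> / (1 - of_real q)) * (\<phi> (xp q \<gamma> k \<epsilon>) - \<phi> (xp q \<gamma> (k + 1) \<epsilon>))"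
proof -
  define c where "c = complex_of_real (q powi k * \<gamma>)"
  have c0: "c \<noteq> 0" unfolding c_def using powi_pos[of k] g0 q0 by simp
  have x: "xp q \<gamma> k \<epsilon> = of_real \<epsilon> * c" unfolding xp_def c_def by (simp add: mult_ac)
  have "Tm q \<gamma> (qderiv q \<phi>) 0 (k, \<epsilon>) = c * ((\<phi> (xp q \<gamma> k \<epsilon>) - \<phi> (xp q \<gamma> (k + 1) \<epsilon>)) / ((1 - of_real q) * (of_real \<epsilon> * c)))"
    unfolding Tm_eq qderiv_xp[OF e] c_def[symmetric] x[symmetric] by simp
  also have "\<dots> = (of_real \<epsilon> / (1 - of_real q)) * (\<phi> (xp q \<gamma> k \<epsilon>) - \<phi> (xp q \<gamma> (k + 1) \<epsilon>))"
    using e c0 q1c by (auto simp: field_simps)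
  finally show ?thesis .
qed

lemma ibp_0:
  assumes R: "InRep q \<gamma> \<phi> b \<rho> B" and S: "Isum q \<gamma> \<phi>"
  shows "qmoment q \<gamma> 0 (qderiv q \<phi>) = 0"
proof -
  let ?T = "Tm q \<gamma> (qderiv q \<phi>) 0"
  have SD: "(\<lambda>i. norm (?T i)) summable_on (UNIV \<times> {-1,1})" by (rule deriv_Isum_NN(1)[OF R S])
  have SL: "(\<lambda>k. norm (?T (k, 1))) summable_on UNIV" "(\<lambda>k. norm (?T (k, -1))) summable_on UNIV"
    using SD Lat_split_summable by blast+
  have S0: "(\<lambda>i. norm (Tm q \<gamma> \<phi> 0 i)) summable_on (UNIV \<times> {-1,1})" using S by (simp add: Isum_def)
  have slice: "infsum (\<lambda>k. ?T (k, \<epsilon>)) UNIV = - (of_real \<epsilon> / (1 - of_real q)) * b 0"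
    if e: "\<epsilon> \<in> {-1,1}" and sl: "(\<lambda>k. norm (?T (k, \<epsilon>))) summable_on UNIV" for \<epsilon>
  proof -
    define u where "u k = \<phi> (xp q \<gamma> k \<epsilon>)" for k
    define C where "C = of_real \<epsilon> / (1 - complex_of_real q)"
    have pw: "?T (k, \<epsilon>) = C * (u k - u (k + 1))" for k
      unfolding C_def u_def by (rule ibp0_pointwise[OF e])
    have f: "(\<lambda>n. u (int n)) \<longlonglongrightarrow> b 0" unfolding u_def by (rule InRep_lim[OF R e])
    have s1: "(\<lambda>n. u (int n) - u (int (Suc n))) sums (u 0 - b 0)"
      using telescope_sums'[OF f] by simp
    have s1': "(\<lambda>n. ?T (int n, \<epsilon>)) sums (C * (u 0 - b 0))"
      unfolding pw using sums_mult[OF s1, of C] by (simp add: add.commute)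
    define v where "v n = u (- int n)" for n
    have vS: "v (Suc n) = u (- int n - 1)" for n unfolding v_def by (rule arg_cong[where f=u]) simp
    have S0s: "(\<lambda>k. norm (Tm q \<gamma> \<phi> 0 (k, \<epsilon>))) summable_on UNIV"
      using S0 Lat_split_summable e by auto
    hence "summable (\<lambda>n. norm (Tm q \<gamma> \<phi> 0 (- int n - 1, \<epsilon>)))"
      using Z_split_summable[of "\<lambda>k. Tm q \<gamma> \<phi> 0 (k, \<epsilon>)"] by simp
    hence z: "(\<lambda>n. norm (Tm q \<gamma> \<phi> 0 (- int n - 1, \<epsilon>)) / \<gamma>) \<longlonglongrightarrow> 0"
      using summable_LIMSEQ_zero tendsto_divide_zero by blast
    have le: "norm (v (Suc n)) \<le> norm (Tm q \<gamma> \<phi> 0 (- int n - 1, \<epsilon>)) / \<gamma>" for n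
    proof -
      have p: "1 \<le> q powi (- int n - 1)" by (rule powi_ge1) simp
      have "norm (Tm q \<gamma> \<phi> 0 (- int n - 1, \<epsilon>)) = q powi (- int n - 1) * \<gamma> * norm (v (Suc n))"
        unfolding Tm_eq vS u_def using powi_pos[of "- int n - 1"] g0
        by (simp only: norm_mult norm_of_real power_0 mult_1_right abs_of_pos mult_pos_pos)
      moreover have "\<gamma> * norm (v (Suc n)) \<le> q powi (- int n - 1) * \<gamma> * norm (v (Suc n))"
      proof -
        have "1 * (\<gamma> * norm (v (Suc n))) \<le> q powi (- int n - 1) * (\<gamma> * norm (v (Suc n)))"
          using p g0 by (intro mult_right_mono) auto
        thus ?thesis by (simp add: mult.assoc)
      qed
      ultimately show ?thesis using g0 by (simp add: field_simps)
    qed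
    have "(\<lambda>n. v (Suc n)) \<longlonglongrightarrow> 0"
      by (rule Lim_null_comparison[OF _ z]) (use le in auto)
    hence vl: "v \<longlonglongrightarrow> 0" by (rule LIMSEQ_imp_Suc)
    have s2: "(\<lambda>n. v (Suc n) - v n) sums (0 - v 0)" by (rule telescope_sums[OF vl])
    have s2': "(\<lambda>n. ?T (- int n - 1, \<epsilon>)) sums (C * (0 - u 0))"
    proof -
      have "?T (- int n - 1, \<epsilon>) = C * (v (Suc n) - v n)" for n
        unfolding pw vS by (simp add: v_def)
      thus ?thesis using sums_mult[OF s2, of C] by (simp add: v_def)
    qed
    have "infsum (\<lambda>k. ?T (k, \<epsilon>)) UNIV = (\<Sum>n. ?T (int n, \<epsilon>)) + (\<Sum>n. ?T (- int n - 1, \<epsilon>))"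
      by (rule Z_split_infsum[OF sl])
    also have "\<dots> = C * (u 0 - b 0) + C * (0 - u 0)" using s1' s2' by (simp add: sums_iff)
    also have "\<dots> = - C * b 0" by (simp add: algebra_simps)
    finally show ?thesis unfolding C_def .
  qed
  have "infsum ?T (UNIV \<times> {-1,1}) = infsum (\<lambda>k. ?T (k, 1)) UNIV + infsum (\<lambda>k. ?T (k, -1)) UNIV"
    by (rule Lat_split_infsum[OF SD])
  also have "\<dots> = 0" using slice[OF _ SL(1)] slice[OF _ SL(2)] by simp
  finally have "infsum ?T (UNIV \<times> {-1,1}) = 0" .
  thus ?thesis unfolding qmoment_def qint_def by (simp add: Tm_def)
qed

lemma moment_iter:
  assumes R: "InRep q \<gamma> g b \<rho> B" and S: "Isum q \<gamma> g"
  shows "qmoment q \<gamma> n ((qderiv q ^^ d) g) =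
    (if d \<le> n then (-1) ^ d * of_real (qfact q n / qfact q (n - d)) * qmoment q \<gamma> (n - d) g else 0)"
proof (induction d arbitrary: n)
  case 0
  have lt: "q * q ^ j < 1" for j
  proof -
    have "q * q ^ j \<le> q" using q0 q1 by (intro mult_left_le power_le_one) auto
    thus ?thesis using q1 by simp
  qed
  have "qfact q n \<noteq> 0"
    using q0 q1 by (auto simp: qfact_def qpoch_def) (metis lt less_irrefl)
  then show ?case by simp
next
  case (Suc d)
  have IR: "InRep q \<gamma> ((qderiv q ^^ d) g) ((Dop q ^^ d) b) \<rho> (B * th \<rho> ^ d)"
    and IS: "Isum q \<gamma> ((qderiv q ^^ d) g)" using iter_lat[OF R S] by blast+
  show ?case
  proof (cases n)
    case 0
    then show ?thesis using ibp_0[OF IR IS] by simp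
  next
    case (Suc m)
    have q1': "q \<noteq> 1" using q1 by simp
    have "qmoment q \<gamma> n ((qderiv q ^^ Suc d) g) = - of_real (qn q (Suc m)) * qmoment q \<gamma> m ((qderiv q ^^ d) g)"
      unfolding Suc using ibp_Suc[OF IR IS, of m] by simp
    also have "\<dots> = (if Suc d \<le> n then (-1) ^ Suc d * of_real (qfact q n / qfact q (n - Suc d)) * qmoment q \<gamma> (n - Suc d) g else 0)"
      unfolding Suc.IH[of m] Suc using qfact_Suc[OF q1', of m] by (simp add: field_simps)
    finally show ?thesis .
  qed
qed

end


definition cf :: "real \<Rightarrow> real \<Rightarrow> (complex \<Rightarrow> complex) \<Rightarrow> nat \<Rightarrow> complex" where
  "cf q \<gamma> f e = (-1) ^ e * qmoment q \<gamma> e f / complex_of_real (qfact q e)"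

lemma qconv_term_cf: "qconv_term q \<gamma> f g x e = cf q \<gamma> f e * (qderiv q ^^ e) g x"
  by (simp add: qconv_term_def cf_def)

lemma qconv_cf: "qconv q \<gamma> f g x = (\<Sum>e. cf q \<gamma> f e * (qderiv q ^^ e) g x)"
  by (simp add: qconv_def qconv_term_cf)

lemma qfact_pos:
  assumes "0 < q" "q < 1" shows "0 < qfact q n"
proof -
  have lt: "q * q ^ j < 1" for j
  proof -
    have "q * q ^ j \<le> q" using assms by (intro mult_left_le power_le_one) auto
    thus ?thesis using assms by linarith
  qed
  have "0 < qpoch q q n" unfolding qpoch_def by (intro prod_pos) (use lt in auto)
  thus ?thesis using assms by (simp add: qfact_def)
qed

lemma IE_coef:
  assumes f: "f \<in> I_E q \<gamma>" and q: "0 < q" "q < 1"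
  shows "summable (\<lambda>e. norm (cf q \<gamma> f e) * R ^ e)"
proof -
  define a where "a k = qmoment q \<gamma> k f / complex_of_real (qfact q k)" for k
  have "summable (\<lambda>k. qmoment q \<gamma> k f * (of_real (\<bar>R\<bar> + 1)) ^ k / complex_of_real (qfact q k))"
    using f by (simp add: I_E_def)
  hence "summable (\<lambda>k. a k * (of_real (\<bar>R\<bar> + 1)) ^ k)"
    by (simp add: a_def field_simps)
  hence s: "summable (\<lambda>k. norm (a k * (of_real \<bar>R\<bar>) ^ k))"
    by (rule powser_insidea) simp
  show ?thesis
  proof (rule summable_comparison_test[OF _ s])
    have "norm (norm (cf q \<gamma> f e) * R ^ e) \<le> norm (a e * (of_real \<bar>R\<bar>) ^ e)" for e
      by (simp add: cf_def a_def norm_mult norm_divide norm_power abs_mult power_abs)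
    thus "\<exists>N. \<forall>n\<ge>N. norm (norm (cf q \<gamma> f n) * R ^ n) \<le> norm (a n * (of_real \<bar>R\<bar>) ^ n)" by blast
  qed
qed

context ql
begin

lemma HD_InRep:
  assumes f: "f \<in> HD_I_E q \<gamma>"
  shows "\<exists>b \<rho> B. InRep q \<gamma> f b \<rho> B"
proof -
  obtain r h where inb: "\<forall>k::nat. \<forall>\<epsilon>\<in>{-1,1::real}. complex_of_real (\<epsilon> * q ^ k * \<gamma>) \<in> ball 0 r"
    and hol: "h holomorphic_on ball 0 r" and eq: "\<forall>x \<in> qlattice q \<gamma> \<inter> ball 0 r. h x = f x"
    using f unfolding HD_I_E_def by blast
  have "complex_of_real (1 * q ^ 0 * \<gamma>) \<in> ball 0 r" using inb by blast
  hence "norm (complex_of_real \<gamma>) < r" by (simp add: dist_norm)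
  hence gr: "\<gamma> < r" using g0 by simp
  define \<rho> where "\<rho> = (\<gamma> + r) / 2"
  have rho: "\<gamma> < \<rho>" "\<rho> < r" using gr by (auto simp: \<rho>_def)
  define b where "b n = (deriv ^^ n) h 0 / fact n" for n
  have ps: "(\<lambda>n. b n * w ^ n) sums h w" if "w \<in> ball 0 r" for w
    using holomorphic_power_series[OF hol that] by (simp add: b_def)
  have "of_real \<rho> \<in> ball (0::complex) r" using rho g0 by simp
  hence "summable (\<lambda>n. b n * of_real \<rho> ^ n)" using ps sums_summable by blast
  hence "(\<lambda>n. b n * of_real \<rho> ^ n) \<longlonglongrightarrow> 0" by (rule summable_LIMSEQ_zero)
  hence "Bseq (\<lambda>n. b n * of_real \<rho> ^ n)" by (intro convergent_imp_Bseq) (auto simp: convergent_def)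
  then obtain B where B: "0 < B" "\<And>n. norm (b n * of_real \<rho> ^ n) \<le> B" by (auto elim: BseqE)
  have rp: "0 < \<rho>" using rho g0 by simp
  have bb: "norm (b n) \<le> B / \<rho> ^ n" for n
    using B(2)[of n] rp by (simp add: norm_mult norm_power field_simps)
  have sm: "(\<lambda>n. b n * xp q \<gamma> (int k) \<epsilon> ^ n) sums f (xp q \<gamma> (int k) \<epsilon>)" if e: "\<epsilon> \<in> {-1,1}" for k \<epsilon>
  proof -
    have x: "xp q \<gamma> (int k) \<epsilon> = complex_of_real (\<epsilon> * q ^ k * \<gamma>)" by (simp add: xp_def)
    have inball: "xp q \<gamma> (int k) \<epsilon> \<in> ball 0 r" unfolding x using inb e by blast
    have "xp q \<gamma> (int k) \<epsilon> \<in> qlattice q \<gamma>" unfolding qlattice_def xp_def using e by blast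
    hence "h (xp q \<gamma> (int k) \<epsilon>) = f (xp q \<gamma> (int k) \<epsilon>)" using eq inball by blast
    thus ?thesis using ps[OF inball] by simp
  qed
  have "InRep q \<gamma> f b \<rho> B" unfolding InRep_def using rho bb sm B by auto
  thus ?thesis by blast
qed

end


context ql
begin

lemma moment_conv:
  assumes cs: "\<And>R. summable (\<lambda>d. norm (c d) * R ^ d)"
    and R: "InRep q \<gamma> g b \<rho> B" and S: "Isum q \<gamma> g"
  shows "qmoment q \<gamma> n (\<lambda>x. \<Sum>d. c d * (qderiv q ^^ d) g x) =
         (\<Sum>d\<le>n. c d * qmoment q \<gamma> n ((qderiv q ^^ d) g))"
proof -
  define L where "L = (UNIV :: int set) \<times> {-1, 1::real}"
  define T where "T d = Tm q \<gamma> ((qderiv q ^^ d) g) n" for d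
  define N where "N d = NN q \<gamma> ((qderiv q ^^ d) g) n" for d
  define Rr where "Rr = Rm \<rho> B n"
  have r: "\<gamma> < \<rho>" "0 \<le> B" using R by (auto simp: InRep_def)
  have Rr0: "0 \<le> Rr" unfolding Rr_def by (rule Rm_nonneg[OF r(1)])
  have th0: "0 \<le> th \<rho>" using r g0 q1 by (simp add: th_def)
  have Nb: "N d \<le> (N 0 + B) * Rr ^ d" for d
  proof -
    have "N d + B * th \<rho> ^ d \<le> (N 0 + B) * Rr ^ d"
      using iter_lat[OF R S, of d n] by (simp add: N_def Rr_def)
    moreover have "0 \<le> B * th \<rho> ^ d" using r th0 by simp
    ultimately show ?thesis by linarith
  qed
  have N0: "0 \<le> N d" for d unfolding N_def by (rule NN_nonneg)
  have Sd: "(\<lambda>i. norm (T d i)) summable_on L" for d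
    using iter_lat[OF R S, of d n] unfolding Isum_def T_def L_def by blast
  have hs: "((\<lambda>i. norm (c d * T d i)) has_sum (norm (c d) * N d)) L" for d
  proof -
    have "((\<lambda>i. norm (T d i)) has_sum N d) L" using Sd[of d] unfolding N_def NN_def T_def L_def
      by (simp add: has_sum_infsum)
    from has_sum_cmult_right[OF this, of "norm (c d)"] show ?thesis by (simp add: norm_mult)
  qed
  have sN: "summable (\<lambda>d. norm (c d) * N d)"
  proof (rule summable_comparison_test[OF _ summable_mult[OF cs[of Rr], of "N 0 + B"]])
    have "norm (norm (c d) * N d) \<le> (N 0 + B) * (norm (c d) * Rr ^ d)" for d
    proof -
      have "norm (c d) * N d \<le> norm (c d) * ((N 0 + B) * Rr ^ d)" by (rule mult_left_mono[OF Nb]) simp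
      moreover have "norm (norm (c d) * N d) = norm (c d) * N d" using N0[of d] by simp
      ultimately show ?thesis by (simp add: mult_ac)
    qed
    thus "\<exists>M. \<forall>d\<ge>M. norm (norm (c d) * N d) \<le> (N 0 + B) * (norm (c d) * Rr ^ d)" by blast
  qed
  have sN': "(\<lambda>d. norm (c d) * N d) summable_on UNIV"
    using sN N0 by (subst summable_on_UNIV_nonneg_real_iff) auto
  have psi: "(\<lambda>(d,i). norm (c d * T d i)) summable_on (Sigma UNIV (\<lambda>_. L))"
    by (rule summable_on_SigmaI[where g = "\<lambda>d. norm (c d) * N d"]) (use hs sN' in auto)
  have eqf: "(\<lambda>x. norm ((\<lambda>(d,i). c d * T d i) x)) = (\<lambda>(d,i). norm (c d * T d i))"
    by (auto simp: fun_eq_iff)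
  have ab: "(\<lambda>(d,i). c d * T d i) summable_on (UNIV \<times> L)"
    by (rule abs_summable_summable) (unfold eqf, rule psi)
  have sw: "infsum (\<lambda>d. infsum (\<lambda>i. c d * T d i) L) UNIV = infsum (\<lambda>i. infsum (\<lambda>d. c d * T d i) UNIV) L"
    using ab by (rule infsum_swap_banach)
  have psi2: "(\<lambda>(i,d). norm (c d * T d i)) summable_on (L \<times> UNIV)"
    using psi summable_on_swap[of "\<lambda>(d,i). norm (c d * T d i)" UNIV L] by simp
  have col: "summable (\<lambda>d. norm (c d * T d i))" if i: "i \<in> L" for i
  proof -
    have "(\<lambda>d. norm (c d * T d i)) summable_on UNIV"
      using summable_on_SigmaD1[of "\<lambda>i d. norm (c d * T d i)" L "\<lambda>_. UNIV", OF _ i] psi2 by simp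
    thus ?thesis using summable_on_UNIV_nonneg_real_iff[of "\<lambda>d. norm (c d * T d i)"] by simp
  qed
  have i1: "infsum (\<lambda>d. c d * T d i) UNIV = (\<Sum>d. c d * T d i)" if "i \<in> L" for i
    using col[OF that] by (rule infsum_suminf_norm)
  have i2: "infsum (\<lambda>i. c d * T d i) L = c d * infsum (T d) L" for d by (rule infsum_cmult_right')
  have bnd: "norm (c d * infsum (T d) L) \<le> norm (c d) * N d" for d
  proof -
    have "norm (infsum (T d) L) \<le> infsum (\<lambda>i. norm (T d i)) L"
      by (rule norm_infsum_bound) (use Sd in simp)
    thus ?thesis unfolding norm_mult N_def NN_def T_def L_def by (intro mult_left_mono) auto
  qed
  have i3: "infsum (\<lambda>d. c d * infsum (T d) L) UNIV = (\<Sum>d. c d * infsum (T d) L)"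
  proof (rule infsum_suminf_norm, rule summable_comparison_test[OF _ sN])
    show "\<exists>M. \<forall>d\<ge>M. norm (norm (c d * infsum (T d) L)) \<le> norm (c d) * N d" using bnd by auto
  qed
  have pt: "Tm q \<gamma> (\<lambda>x. \<Sum>d. c d * (qderiv q ^^ d) g x) n i = (\<Sum>d. c d * T d i)" if i: "i \<in> L" for i
  proof -
    obtain k \<epsilon> where ik: "i = (k, \<epsilon>)" by (cases i)
    define x where "x = xp q \<gamma> k \<epsilon>"
    define K where "K = complex_of_real (q powi k * \<gamma>) * x ^ n"
    have Td: "c d * T d i = K * (c d * (qderiv q ^^ d) g x)" for d
      unfolding T_def ik Tm_eq x_def[symmetric] K_def by (simp add: mult_ac)
    have e: "\<epsilon> \<in> {-1,1}" using i ik by (auto simp: L_def)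
    have K0: "K \<noteq> 0" unfolding K_def x_def using xp_nz[OF e] powi_pos[of k] g0 q0 by simp
    have "summable (\<lambda>d. K * (c d * (qderiv q ^^ d) g x))"
      using summable_norm_cancel[OF col[OF i]] unfolding Td .
    hence su: "summable (\<lambda>d. c d * (qderiv q ^^ d) g x)" using K0 by simp
    have "(\<Sum>d. c d * T d i) = K * (\<Sum>d. c d * (qderiv q ^^ d) g x)"
      unfolding Td by (rule suminf_mult[OF su])
    also have "\<dots> = Tm q \<gamma> (\<lambda>x. \<Sum>d. c d * (qderiv q ^^ d) g x) n i"
      unfolding ik Tm_eq x_def[symmetric] K_def by (simp add: mult_ac)
    finally show ?thesis by simp
  qed
  have "infsum (Tm q \<gamma> (\<lambda>x. \<Sum>d. c d * (qderiv q ^^ d) g x) n) L = infsum (\<lambda>i. \<Sum>d. c d * T d i) L"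
    by (rule infsum_cong) (rule pt)
  also have "\<dots> = infsum (\<lambda>i. infsum (\<lambda>d. c d * T d i) UNIV) L"
    by (rule infsum_cong) (rule i1[symmetric])
  also have "\<dots> = infsum (\<lambda>d. c d * infsum (T d) L) UNIV" unfolding sw[symmetric] i2 ..
  also have "\<dots> = (\<Sum>d. c d * infsum (T d) L)" by (rule i3)
  finally have I: "infsum (Tm q \<gamma> (\<lambda>x. \<Sum>d. c d * (qderiv q ^^ d) g x) n) L = (\<Sum>d. c d * infsum (T d) L)" .
  define K where "K = complex_of_real (q ^ ((n^2 + n) div 2)) * complex_of_real (1 - q)"
  have M: "qmoment q \<gamma> n \<psi> = K * infsum (Tm q \<gamma> \<psi> n) L" for \<psi>
    unfolding qmoment_def qint_def K_def L_def Tm_def by (simp add: mult_ac)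
  have sT: "summable (\<lambda>d. c d * infsum (T d) L)"
    by (rule summable_norm_cancel, rule summable_comparison_test[OF _ sN]) (use bnd in auto)
  have "qmoment q \<gamma> n (\<lambda>x. \<Sum>d. c d * (qderiv q ^^ d) g x) = (\<Sum>d. c d * qmoment q \<gamma> n ((qderiv q ^^ d) g))"
    unfolding M I T_def[symmetric] using suminf_mult[OF sT, of K] by (simp add: mult_ac)
  also have "\<dots> = (\<Sum>d\<le>n. c d * qmoment q \<gamma> n ((qderiv q ^^ d) g))"
    by (rule suminf_finite) (auto simp: moment_iter[OF R S])
  finally show ?thesis .
qed

end


lemma shift_sum:
  fixes h :: "nat \<Rightarrow> complex"
  assumes "summable (\<lambda>e. norm (h e))"
  shows "summable (\<lambda>n. norm (if d \<le> n then h (n - d) else 0))"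
    and "(\<Sum>n. if d \<le> n then h (n - d) else 0) = (\<Sum>e. h e)"
    and "(\<Sum>n. norm (if d \<le> n then h (n - d) else 0)) = (\<Sum>e. norm (h e))"
proof -
  have a: "(\<lambda>i. (\<lambda>n. if d \<le> n then h (n - d) else 0) (i + d)) = h" by auto
  have b: "(\<lambda>i. (\<lambda>n. norm (if d \<le> n then h (n - d) else 0)) (i + d)) = (\<lambda>e. norm (h e))" by auto
  have z: "(\<Sum>i<d. (if d \<le> i then h (i - d) else 0)) = 0" by simp
  have zn: "(\<Sum>i<d. norm (if d \<le> i then h (i - d) else 0)) = 0" by simp
  have s1: "(\<lambda>n. if d \<le> n then h (n - d) else 0) sums (\<Sum>e. h e)"
    using sums_iff_shift[of "\<lambda>n. if d \<le> n then h (n - d) else 0" d "\<Sum>e. h e"]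
    unfolding a z using summable_sums[OF summable_norm_cancel[OF assms]] by simp
  have s2: "(\<lambda>n. norm (if d \<le> n then h (n - d) else 0)) sums (\<Sum>e. norm (h e))"
    using sums_iff_shift[of "\<lambda>n. norm (if d \<le> n then h (n - d) else 0)" d "\<Sum>e. norm (h e)"]
    unfolding b zn using summable_sums[OF assms] by simp
  show "summable (\<lambda>n. norm (if d \<le> n then h (n - d) else 0))" using s2 by (rule sums_summable)
  show "(\<Sum>n. if d \<le> n then h (n - d) else 0) = (\<Sum>e. h e)" using s1 by (rule sums_unique[symmetric])
  show "(\<Sum>n. norm (if d \<le> n then h (n - d) else 0)) = (\<Sum>e. norm (h e))" using s2 by (rule sums_unique[symmetric])
qed

lemma cauchy_rearr:
  fixes A Bq u :: "nat \<Rightarrow> complex"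
  assumes A: "summable (\<lambda>d. norm (A d) * K ^ d)" and Bq: "summable (\<lambda>e. norm (Bq e) * K ^ e)"
    and u: "\<And>n. norm (u n) \<le> M * K ^ n" and K: "0 \<le> K" and M: "0 \<le> M"
  shows "(\<Sum>n. (\<Sum>d\<le>n. A d * Bq (n - d)) * u n) = (\<Sum>d. \<Sum>e. A d * Bq e * u (d + e))"
proof -
  define \<psi> where "\<psi> d e = A d * Bq e * u (d + e)" for d e
  define SB where "SB = (\<Sum>e. norm (Bq e) * K ^ e)"
  have pb: "norm (\<psi> d e) \<le> (norm (A d) * K ^ d * M) * (norm (Bq e) * K ^ e)" for d e
  proof -
    have "norm (\<psi> d e) = norm (A d) * norm (Bq e) * norm (u (d + e))" by (simp add: \<psi>_def norm_mult)
    also have "\<dots> \<le> norm (A d) * norm (Bq e) * (M * K ^ (d + e))" by (intro mult_left_mono u) auto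
    finally show ?thesis by (simp add: power_add mult_ac)
  qed
  have rowS: "summable (\<lambda>e. norm (\<psi> d e))" for d
    by (rule summable_comparison_test[OF _ summable_mult[OF Bq]]) (use pb in auto)
  have rowB: "(\<Sum>e. norm (\<psi> d e)) \<le> (norm (A d) * K ^ d * M) * SB" for d
  proof -
    have "(\<Sum>e. norm (\<psi> d e)) \<le> (\<Sum>e. (norm (A d) * K ^ d * M) * (norm (Bq e) * K ^ e))"
      by (rule suminf_le[OF pb rowS summable_mult[OF Bq]])
    thus ?thesis unfolding SB_def suminf_mult[OF Bq] .
  qed
  define \<phi> where "\<phi> d n = (if d \<le> n then \<psi> d (n - d) else 0)" for d n
  have r: "summable (\<lambda>n. norm (\<phi> d n))" for d unfolding \<phi>_def by (rule shift_sum(1)[OF rowS])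
  have rv: "(\<Sum>n. norm (\<phi> d n)) = (\<Sum>e. norm (\<psi> d e))" for d unfolding \<phi>_def by (rule shift_sum(3)[OF rowS])
  have o: "summable (\<lambda>d. \<Sum>n. norm (\<phi> d n))"
  proof (rule summable_comparison_test[OF _ summable_mult2[OF summable_mult2[OF A, of M], of SB]])
    have "norm (\<Sum>n. norm (\<phi> d n)) \<le> norm (A d) * K ^ d * M * SB" for d
      unfolding rv using rowB[of d] suminf_nonneg[OF rowS[of d]] by simp
    thus "\<exists>N. \<forall>d\<ge>N. norm (\<Sum>n. norm (\<phi> d n)) \<le> norm (A d) * K ^ d * M * SB" by blast
  qed
  have "(\<Sum>d. \<Sum>e. \<psi> d e) = (\<Sum>d. \<Sum>n. \<phi> d n)"
    unfolding \<phi>_def using shift_sum(2)[OF rowS] by simp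
  also have "\<dots> = (\<Sum>n. \<Sum>d. \<phi> d n)" by (rule suminf_swap_general(1)[OF r o])
  also have "\<dots> = (\<Sum>n. (\<Sum>d\<le>n. A d * Bq (n - d)) * u n)"
  proof -
    have "(\<Sum>d. \<phi> d n) = (\<Sum>d\<le>n. \<phi> d n)" for n by (rule suminf_finite) (auto simp: \<phi>_def)
    also have "(\<Sum>d\<le>n. \<phi> d n) = (\<Sum>d\<le>n. A d * Bq (n - d)) * u n" for n
      unfolding sum_distrib_right by (rule sum.cong) (auto simp: \<phi>_def \<psi>_def)
    finally show ?thesis by simp
  qed
  finally show ?thesis unfolding \<psi>_def by simp
qed

context qs
begin

lemma iter_WB: "WB q s C b \<Longrightarrow> WB q s (C * KK q s ^ n) ((Lop q ^^ n) b)"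
proof (induction n)
  case 0 then show ?case by simp
next
  case (Suc n)
  then show ?case using WB_Lop[of "C * KK q s ^ n" "(Lop q ^^ n) b"] by (simp add: mult_ac)
qed

lemma Lopn_comb:
  assumes a: "WB q s C a" and c: "summable (\<lambda>e. norm (c e) * KK q s ^ e)"
  shows "(Lop q ^^ d) (\<lambda>l. \<Sum>e. c e * (Lop q ^^ e) a l) l = (\<Sum>e. c e * (Lop q ^^ (d + e)) a l)"
proof -
  have eq: "(Lop q ^^ d) (\<lambda>l. c e * (Lop q ^^ e) a l) l = c e * (Lop q ^^ (d + e)) a l" for d e l
    unfolding Lopn_scale by (simp add: funpow_add)
  have sm: "summable (\<lambda>e. (Lop q ^^ d) (\<lambda>l. c e * (Lop q ^^ e) a l) l)" for d l
  proof -
    have "norm (c e * (Lop q ^^ (d + e)) a l) \<le> (C * KK q s ^ d * wt q s l) * (norm (c e) * KK q s ^ e)" for e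
    proof -
      have "norm ((Lop q ^^ (d + e)) a l) \<le> C * KK q s ^ (d + e) * wt q s l"
        using iter_WB[OF a, of "d + e"] by (simp add: WB_def)
      hence "norm (c e) * norm ((Lop q ^^ (d + e)) a l) \<le> norm (c e) * (C * KK q s ^ (d + e) * wt q s l)"
        by (intro mult_left_mono) auto
      thus ?thesis by (simp add: norm_mult power_add mult_ac)
    qed
    hence "summable (\<lambda>e. norm (c e * (Lop q ^^ (d + e)) a l))"
      by (intro summable_comparison_test[OF _ summable_mult[OF c]]) auto
    thus ?thesis unfolding eq by (rule summable_norm_cancel)
  qed
  show ?thesis using Lopn_suminf[where u="\<lambda>e l. c e * (Lop q ^^ e) a l" and d=d and l=l and q=q] sm unfolding eq by simp
qed

end


lemma alg3: "(Q::complex) \<noteq> 0 \<Longrightarrow> Q' \<noteq> 0 \<Longrightarrow> sn * (c * (sd * (Q / Q') * m)) / Q = c * ((sn * sd) * m / Q')"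
  by (simp add: field_simps)

lemma neg1_sq: "(-1::complex) ^ d * (-1) ^ d = 1"
  by (induction d) auto

context qs
begin

lemma comp_coef:
  assumes a: "WB q s C a" and cA: "summable (\<lambda>e. norm (cA e) * KK q s ^ e)"
    and cB: "summable (\<lambda>e. norm (cB e) * KK q s ^ e)"
  shows "(\<Sum>d. cA d * (Lop q ^^ d) (\<lambda>l. \<Sum>e. cB e * (Lop q ^^ e) a l) l)
       = (\<Sum>d. \<Sum>e. cA d * cB e * (Lop q ^^ (d + e)) a l)"
proof -
  have C0: "0 \<le> C" by (rule WB_C_nonneg[OF a])
  have "summable (\<lambda>e. cB e * (Lop q ^^ (d + e)) a l)" for d
  proof (rule summable_norm_cancel, rule summable_comparison_test[OF _ summable_mult[OF cB, of "C * KK q s ^ d * wt q s l"]])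
    have "norm (norm (cB e * (Lop q ^^ (d + e)) a l)) \<le> C * KK q s ^ d * wt q s l * (norm (cB e) * KK q s ^ e)" for e
    proof -
      have "norm ((Lop q ^^ (d + e)) a l) \<le> C * KK q s ^ (d + e) * wt q s l"
        using iter_WB[OF a, of "d + e"] by (simp add: WB_def)
      hence "norm (cB e) * norm ((Lop q ^^ (d + e)) a l) \<le> norm (cB e) * (C * KK q s ^ (d + e) * wt q s l)"
        by (intro mult_left_mono) auto
      thus ?thesis by (simp add: norm_mult power_add mult_ac)
    qed
    thus "\<exists>N. \<forall>e\<ge>N. norm (norm (cB e * (Lop q ^^ (d + e)) a l)) \<le> C * KK q s ^ d * wt q s l * (norm (cB e) * KK q s ^ e)"
      by blast
  qed
  hence "cA d * (\<Sum>e. cB e * (Lop q ^^ (d + e)) a l) = (\<Sum>e. cA d * cB e * (Lop q ^^ (d + e)) a l)" for d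
    using suminf_mult[of "\<lambda>e. cB e * (Lop q ^^ (d + e)) a l" "cA d"] by (simp add: mult_ac)
  thus ?thesis unfolding Lopn_comb[OF a cB] by simp
qed

lemma double_swap:
  assumes a: "WB q s C a" and cA: "summable (\<lambda>e. norm (cA e) * KK q s ^ e)"
    and cB: "summable (\<lambda>e. norm (cB e) * KK q s ^ e)"
  shows "(\<Sum>d. \<Sum>e. cA d * cB e * (Lop q ^^ (d + e)) a l) = (\<Sum>e. \<Sum>d. cB e * cA d * (Lop q ^^ (e + d)) a l)"
proof -
  have C0: "0 \<le> C" by (rule WB_C_nonneg[OF a])
  have K0: "0 < KK q s" by (rule KK_pos[OF q0 q1 s0])
  have pb: "norm (cA d * cB e * (Lop q ^^ (d + e)) a l) \<le> (norm (cA d) * KK q s ^ d) * (C * wt q s l * (norm (cB e) * KK q s ^ e))" for d e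
  proof -
    have "norm ((Lop q ^^ (d + e)) a l) \<le> C * KK q s ^ (d + e) * wt q s l"
      using iter_WB[OF a, of "d + e"] by (simp add: WB_def)
    hence "norm (cA d) * norm (cB e) * norm ((Lop q ^^ (d + e)) a l) \<le> norm (cA d) * norm (cB e) * (C * KK q s ^ (d + e) * wt q s l)"
      by (intro mult_left_mono) auto
    thus ?thesis by (simp add: norm_mult power_add mult_ac)
  qed
  have "(\<Sum>d. \<Sum>e. cA d * cB e * (Lop q ^^ (d + e)) a l) = (\<Sum>e. \<Sum>d. cA d * cB e * (Lop q ^^ (d + e)) a l)"
    by (rule suminf_swap_prod(1)[OF pb cA summable_mult[OF cB]])
       (use C0 K0 wt_pos[OF q0 s0, of l] in auto)
  thus ?thesis by (simp add: mult_ac add.commute)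
qed

end

theorem proposition5p2:
  fixes q \<gamma> s :: real
  assumes "0 < q" and "q < 1" and "0 < \<gamma>" and "0 < s" and "s < 1 / sqrt q"
  shows "(\<forall>g \<in> HD_I_E q \<gamma>. \<forall>F \<in> M_s q s.
            (\<forall>x. \<bar>Im x\<bar> < 1 \<longrightarrow> qconv_defined q \<gamma> g F x) \<and> qconv q \<gamma> g F \<in> M_s q s)
       \<and> (\<forall>f \<in> HD_I_E q \<gamma>. \<forall>g \<in> HD_I_E q \<gamma>. \<forall>F \<in> M_s q s. \<forall>x. \<bar>Im x\<bar> < 1 \<longrightarrow>
            qconv q \<gamma> (qconv q \<gamma> f g) F x = qconv q \<gamma> f (qconv q \<gamma> g F) x)
       \<and> (\<forall>f \<in> HD_I_E q \<gamma>. \<forall>g \<in> HD_I_E q \<gamma>. \<forall>F \<in> M_s q s. \<forall>x. \<bar>Im x\<bar> < 1 \<longrightarrow>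
            qconv q \<gamma> f (qconv q \<gamma> g F) x = qconv q \<gamma> g (qconv q \<gamma> f F) x)"
proof -
  interpret A: qs q s using assms by unfold_locales auto
  interpret B: ql q \<gamma> using assms by unfold_locales auto
  let ?K = "KK q s"
  have cfs: "summable (\<lambda>e. norm (cf q \<gamma> f e) * R ^ e)" if "f \<in> HD_I_E q \<gamma>" for f R
    using that assms by (intro IE_coef) (auto simp: HD_I_E_def)
  have HDrep: "\<exists>b \<rho> B. InRep q \<gamma> g b \<rho> B \<and> Isum q \<gamma> g" if "g \<in> HD_I_E q \<gamma>" for g
    using B.HD_InRep[OF that] that by (auto simp: Isum_I_inf HD_I_E_def I_E_def)
  have Ms: "\<exists>a C. Rep q F a \<and> WB q s C a" if Fm: "F \<in> M_s q s" for F
  proof -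
    obtain a C where "C > 0" and b: "\<forall>l. norm (a l) \<le> C * s ^ l * q powr (real (l ^ 2) / 2)"
      and r: "\<forall>x. \<bar>Im x\<bar> < 1 \<longrightarrow> F x = (\<Sum>l. a l * x ^ l) * qexp (complex_of_real (q ^ 2)) (- (x ^ 2))"
    proof -
      have "\<exists>a C. C > 0 \<and> (\<forall>l. norm (a l :: complex) \<le> C * s ^ l * q powr (real (l ^ 2) / 2)) \<and>
        (\<forall>x. \<bar>Im x\<bar> < 1 \<longrightarrow> F x = (\<Sum>l. a l * x ^ l) * qexp (complex_of_real (q ^ 2)) (- (x ^ 2)))"
        using Fm by (simp add: M_s_def)
      then show ?thesis using that by blast
    qed
    have "WB q s C a" using b by (simp add: WB_def wt_def mult.assoc)
    moreover have "Rep q F a" using r by (simp add: Rep_def PS_def Eq_def)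
    ultimately show ?thesis by blast
  qed
  have toMs: "G \<in> M_s q s" if "Rep q G \<beta>" "WB q s C \<beta>" for G \<beta> C
  proof -
    have W: "WB q s (\<bar>C\<bar> + 1) \<beta>" by (rule A.WB_mono[OF that(2)]) simp
    show ?thesis unfolding M_s_def
      using W that(1) by (intro CollectI exI[of _ \<beta>] exI[of _ "\<bar>C\<bar> + 1"])
        (auto simp: WB_def wt_def Rep_def PS_def Eq_def mult.assoc)
  qed
  have qconv_eq: "qconv q \<gamma> g F = (\<lambda>x. \<Sum>e. cf q \<gamma> g e * (qderiv q ^^ e) F x)" for g F
    by (rule ext) (rule qconv_cf)
  have conv1: "Rep q (qconv q \<gamma> g F) (\<lambda>l. \<Sum>e. cf q \<gamma> g e * (Lop q ^^ e) a l)
      \<and> WB q s (C * (\<Sum>e. norm (cf q \<gamma> g e) * ?K ^ e)) (\<lambda>l. \<Sum>e. cf q \<gamma> g e * (Lop q ^^ e) a l)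
      \<and> (\<forall>x. \<bar>Im x\<bar> < 1 \<longrightarrow> qconv_defined q \<gamma> g F x)"
    if g: "summable (\<lambda>e. norm (cf q \<gamma> g e) * ?K ^ e)" and R: "Rep q F a" and W: "WB q s C a" for g F a C
    using A.act_Rep[OF R W g] unfolding qconv_eq[symmetric]
    by (auto simp: qconv_defined_def qconv_term_cf)
  have part1: "\<forall>g \<in> HD_I_E q \<gamma>. \<forall>F \<in> M_s q s.
            (\<forall>x. \<bar>Im x\<bar> < 1 \<longrightarrow> qconv_defined q \<gamma> g F x) \<and> qconv q \<gamma> g F \<in> M_s q s"
  proof (intro ballI)
    fix g F assume g: "g \<in> HD_I_E q \<gamma>" and F: "F \<in> M_s q s"
    obtain a C where R: "Rep q F a" and W: "WB q s C a" using Ms[OF F] by blast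
    note c = conv1[OF cfs[OF g] R W]
    show "(\<forall>x. \<bar>Im x\<bar> < 1 \<longrightarrow> qconv_defined q \<gamma> g F x) \<and> qconv q \<gamma> g F \<in> M_s q s"
      using c toMs by blast
  qed
  have part3: "\<forall>f \<in> HD_I_E q \<gamma>. \<forall>g \<in> HD_I_E q \<gamma>. \<forall>F \<in> M_s q s. \<forall>x. \<bar>Im x\<bar> < 1 \<longrightarrow>
            qconv q \<gamma> f (qconv q \<gamma> g F) x = qconv q \<gamma> g (qconv q \<gamma> f F) x"
  proof (intro ballI allI impI)
    fix f g F x assume f: "f \<in> HD_I_E q \<gamma>" and g: "g \<in> HD_I_E q \<gamma>" and F: "F \<in> M_s q s"
      and x: "\<bar>Im x\<bar> < 1"
    obtain a C where R: "Rep q F a" and W: "WB q s C a" using Ms[OF F] by blast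
    note cg = conv1[OF cfs[OF g] R W] and cf' = conv1[OF cfs[OF f] R W]
    note fg = conv1[OF cfs[OF f] conjunct1[OF cg] conjunct1[OF conjunct2[OF cg]]]
    note gf = conv1[OF cfs[OF g] conjunct1[OF cf'] conjunct1[OF conjunct2[OF cf']]]
    have e1: "qconv q \<gamma> f (qconv q \<gamma> g F) x = PS (\<lambda>l. \<Sum>d. cf q \<gamma> f d * (Lop q ^^ d) (\<lambda>l. \<Sum>e. cf q \<gamma> g e * (Lop q ^^ e) a l) l) x * Eq q x"
      using fg x unfolding Rep_def by blast
    have e2: "qconv q \<gamma> g (qconv q \<gamma> f F) x = PS (\<lambda>l. \<Sum>e. cf q \<gamma> g e * (Lop q ^^ e) (\<lambda>l. \<Sum>d. cf q \<gamma> f d * (Lop q ^^ d) a l) l) x * Eq q x"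
      using gf x unfolding Rep_def by blast
    have "(\<lambda>l. \<Sum>d. cf q \<gamma> f d * (Lop q ^^ d) (\<lambda>l. \<Sum>e. cf q \<gamma> g e * (Lop q ^^ e) a l) l)
        = (\<lambda>l. \<Sum>e. cf q \<gamma> g e * (Lop q ^^ e) (\<lambda>l. \<Sum>d. cf q \<gamma> f d * (Lop q ^^ d) a l) l)"
    proof
      fix l
      show "(\<Sum>d. cf q \<gamma> f d * (Lop q ^^ d) (\<lambda>l. \<Sum>e. cf q \<gamma> g e * (Lop q ^^ e) a l) l)
        = (\<Sum>e. cf q \<gamma> g e * (Lop q ^^ e) (\<lambda>l. \<Sum>d. cf q \<gamma> f d * (Lop q ^^ d) a l) l)"
        unfolding A.comp_coef[OF W cfs[OF f] cfs[OF g]] A.comp_coef[OF W cfs[OF g] cfs[OF f]]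
        by (rule A.double_swap[OF W cfs[OF f] cfs[OF g]])
    qed
    thus "qconv q \<gamma> f (qconv q \<gamma> g F) x = qconv q \<gamma> g (qconv q \<gamma> f F) x" unfolding e1 e2 by simp
  qed
  have part2: "\<forall>f \<in> HD_I_E q \<gamma>. \<forall>g \<in> HD_I_E q \<gamma>. \<forall>F \<in> M_s q s. \<forall>x. \<bar>Im x\<bar> < 1 \<longrightarrow>
            qconv q \<gamma> (qconv q \<gamma> f g) F x = qconv q \<gamma> f (qconv q \<gamma> g F) x"
  proof (intro ballI allI impI)
    fix f g F x assume f: "f \<in> HD_I_E q \<gamma>" and g: "g \<in> HD_I_E q \<gamma>" and F: "F \<in> M_s q s"
      and x: "\<bar>Im x\<bar> < 1"
    obtain a C where R: "Rep q F a" and W: "WB q s C a" using Ms[OF F] by blast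
    obtain b \<rho> B where Rg: "InRep q \<gamma> g b \<rho> B" and Sg: "Isum q \<gamma> g" using HDrep[OF g] by blast
    have qf0: "qfact q n \<noteq> 0" for n using qfact_pos[OF assms(1,2)] by (metis less_irrefl)
    have cfg: "cf q \<gamma> (qconv q \<gamma> f g) n = (\<Sum>d\<le>n. cf q \<gamma> f d * cf q \<gamma> g (n - d))" for n
    proof -
      have "qmoment q \<gamma> n (qconv q \<gamma> f g) = (\<Sum>d\<le>n. cf q \<gamma> f d * qmoment q \<gamma> n ((qderiv q ^^ d) g))"
        unfolding qconv_eq by (rule B.moment_conv[OF cfs[OF f] Rg Sg])
      also have "\<dots> = (\<Sum>d\<le>n. cf q \<gamma> f d * ((-1) ^ d * of_real (qfact q n / qfact q (n - d)) * qmoment q \<gamma> (n - d) g))"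
        by (rule sum.cong) (auto simp: B.moment_iter[OF Rg Sg])
      finally have m: "qmoment q \<gamma> n (qconv q \<gamma> f g) = \<dots>" .
      have t: "(-1) ^ n * (cf q \<gamma> f d * ((-1) ^ d * of_real (qfact q n / qfact q (n - d)) * qmoment q \<gamma> (n - d) g))
              / complex_of_real (qfact q n) = cf q \<gamma> f d * cf q \<gamma> g (n - d)" if d: "d \<le> n" for d
      proof -
        have sg: "(-1::complex) ^ n * (-1) ^ d = (-1) ^ (n - d)"
        proof -
          have "n + d = (n - d) + 2 * d" using d by simp
          hence "(-1::complex) ^ (n + d) = (-1) ^ (n - d) * ((-1) ^ 2) ^ d" by (simp only: power_add power_mult)
          thus ?thesis by (simp add: power_add)
        qed
        have Q0: "complex_of_real (qfact q n) \<noteq> 0" "complex_of_real (qfact q (n - d)) \<noteq> 0" using qf0 by auto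
        show ?thesis unfolding of_real_divide alg3[OF Q0] sg cf_def ..
      qed
      have "cf q \<gamma> (qconv q \<gamma> f g) n = (\<Sum>d\<le>n. (-1) ^ n * (cf q \<gamma> f d * ((-1) ^ d * of_real (qfact q n / qfact q (n - d)) * qmoment q \<gamma> (n - d) g))
              / complex_of_real (qfact q n))"
        unfolding cf_def[of q \<gamma> "qconv q \<gamma> f g"] m by (simp add: sum_distrib_left sum_divide_distrib)
      also have "\<dots> = (\<Sum>d\<le>n. cf q \<gamma> f d * cf q \<gamma> g (n - d))" by (rule sum.cong[OF refl], rule t) simp
      finally show ?thesis .
    qed
    have K0: "0 < ?K" by (rule KK_pos) (use assms in auto)
    define P where "P d = norm (cf q \<gamma> f d) * ?K ^ d" for d
    define Q where "Q e = norm (cf q \<gamma> g e) * ?K ^ e" for e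
    have sP: "summable (\<lambda>d. norm (P d))" using cfs[OF f, of ?K] K0 by (simp add: P_def abs_mult)
    have sQ: "summable (\<lambda>d. norm (Q d))" using cfs[OF g, of ?K] K0 by (simp add: Q_def abs_mult)
    have sPQ: "summable (\<lambda>k. \<Sum>i\<le>k. P i * Q (k - i))"
      using Cauchy_product_sums[OF sP sQ] by (rule sums_summable)
    have cfgs: "summable (\<lambda>n. norm (cf q \<gamma> (qconv q \<gamma> f g) n) * ?K ^ n)"
    proof (rule summable_comparison_test[OF _ sPQ])
      have "norm (norm (cf q \<gamma> (qconv q \<gamma> f g) n) * ?K ^ n) \<le> (\<Sum>i\<le>n. P i * Q (n - i))" for n
      proof -
        have "norm (cf q \<gamma> (qconv q \<gamma> f g) n) \<le> (\<Sum>d\<le>n. norm (cf q \<gamma> f d) * norm (cf q \<gamma> g (n - d)))"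
          unfolding cfg by (rule order.trans[OF norm_sum]) (simp add: norm_mult)
        hence "norm (cf q \<gamma> (qconv q \<gamma> f g) n) * ?K ^ n \<le> (\<Sum>d\<le>n. norm (cf q \<gamma> f d) * norm (cf q \<gamma> g (n - d))) * ?K ^ n"
          using K0 by (intro mult_right_mono) auto
        also have "\<dots> = (\<Sum>i\<le>n. P i * Q (n - i))"
          unfolding sum_distrib_right P_def Q_def
          by (rule sum.cong) (auto simp: power_add[symmetric] mult_ac)
        finally show ?thesis using K0 by simp
      qed
      thus "\<exists>N. \<forall>n\<ge>N. norm (norm (cf q \<gamma> (qconv q \<gamma> f g) n) * ?K ^ n) \<le> (\<Sum>i\<le>n. P i * Q (n - i))" by blast
    qed
    note cg = conv1[OF cfs[OF g] R W]
    note fgF = conv1[OF cfs[OF f] conjunct1[OF cg] conjunct1[OF conjunct2[OF cg]]]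
    note fg_F = conv1[OF cfgs R W]
    have e1: "qconv q \<gamma> (qconv q \<gamma> f g) F x = PS (\<lambda>l. \<Sum>n. cf q \<gamma> (qconv q \<gamma> f g) n * (Lop q ^^ n) a l) x * Eq q x"
      using fg_F x unfolding Rep_def by blast
    have e2: "qconv q \<gamma> f (qconv q \<gamma> g F) x = PS (\<lambda>l. \<Sum>d. cf q \<gamma> f d * (Lop q ^^ d) (\<lambda>l. \<Sum>e. cf q \<gamma> g e * (Lop q ^^ e) a l) l) x * Eq q x"
      using fgF x unfolding Rep_def by blast
    have C0: "0 \<le> C" by (rule A.WB_C_nonneg[OF W])
    have "(\<lambda>l. \<Sum>n. cf q \<gamma> (qconv q \<gamma> f g) n * (Lop q ^^ n) a l)
        = (\<lambda>l. \<Sum>d. cf q \<gamma> f d * (Lop q ^^ d) (\<lambda>l. \<Sum>e. cf q \<gamma> g e * (Lop q ^^ e) a l) l)"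
    proof
      fix l
      have ub: "norm ((Lop q ^^ n) a l) \<le> (C * wt q s l) * ?K ^ n" for n
        using A.iter_WB[OF W, of n] by (simp add: WB_def mult_ac)
      show "(\<Sum>n. cf q \<gamma> (qconv q \<gamma> f g) n * (Lop q ^^ n) a l)
        = (\<Sum>d. cf q \<gamma> f d * (Lop q ^^ d) (\<lambda>l. \<Sum>e. cf q \<gamma> g e * (Lop q ^^ e) a l) l)"
        unfolding cfg A.comp_coef[OF W cfs[OF f] cfs[OF g]]
        by (rule cauchy_rearr[OF cfs[OF f] cfs[OF g] ub])
           (use K0 C0 wt_pos[OF assms(1) assms(4), of l] in auto)
    qed
    thus "qconv q \<gamma> (qconv q \<gamma> f g) F x = qconv q \<gamma> f (qconv q \<gamma> g F) x" unfolding e1 e2 by simp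
  qed
  show ?thesis using part1 part2 part3 by blast
qed


end
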